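(* Let $\mathcal{A}$ be a complex Banach algebra with unity, $a,b\in\mathcal{A}$ and $k$ a positive integer. Suppose $\alpha_{1}\alpha_{2}\cdots\alpha_{k}ab=0$ for all $\alpha_{1},\dots,\alpha_{k}\in\{a,b\}$. Then $a$ and $b$ are both g$\pi$-Hirano invertible if and only if $a+b$ is g$\pi$-Hirano invertible.
   Context: $\mathcal{A}^{qnil}$ denotes the set of quasinilpotent elements of $\mathcal{A}$ (spectrum equal to $\{0\}$). An element $a\in\mathcal{A}$ is g$\pi$-Hirano invertible if there exists $x\in\mathcal{A}$ with $xax=x$, $ax=xa$ and $a-a^{n+2}x\in\mathcal{A}^{qnil}$ for some positive integer $n$. *)

theory Defs
  imports "HOL-Analysis.Analysis"
begin

text \<open>Complex unital Banach algebras: a real unital Banach algebra equipped with a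
compatible complex scalar multiplication (the library has no such class).\<close>

class complex_banach_algebra_1 = real_normed_algebra_1 + banach +
  fixes scaleC :: "complex \<Rightarrow> 'a \<Rightarrow> 'a"
  assumes scaleC_add_right: "scaleC c (x + y) = scaleC c x + scaleC c y"
    and scaleC_add_left: "scaleC (c + d) x = scaleC c x + scaleC d x"
    and scaleC_scaleC: "scaleC c (scaleC d x) = scaleC (c * d) x"
    and scaleC_one: "scaleC 1 x = x"
    and scaleR_scaleC: "scaleR r x = scaleC (complex_of_real r) x"
    and norm_scaleC: "norm (scaleC c x) = cmod c * norm x"
    and mult_scaleC_left: "scaleC c x * y = scaleC c (x * y)"
    and mult_scaleC_right: "x * scaleC c y = scaleC c (x * y)"

definition invertible_elem :: "'a::ring_1 \<Rightarrow> bool" where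
  "invertible_elem a \<longleftrightarrow> (\<exists>y. a * y = 1 \<and> y * a = 1)"

definition spectrum :: "'a::complex_banach_algebra_1 \<Rightarrow> complex set" where
  "spectrum a = {z. \<not> invertible_elem (scaleC z 1 - a)}"

definition quasinilpotent :: "'a::complex_banach_algebra_1 \<Rightarrow> bool" where
  "quasinilpotent a \<longleftrightarrow> spectrum a = {0}"

definition gpi_Hirano_invertible :: "'a::complex_banach_algebra_1 \<Rightarrow> bool" where
  "gpi_Hirano_invertible a \<longleftrightarrow>
     (\<exists>x. x * a * x = x \<and> a * x = x * a \<and>
          (\<exists>n::nat. n > 0 \<and> quasinilpotent (a - a ^ (n + 2) * x)))"

end

theory Submission
  imports Defs "HOL-Computational_Algebra.Fundamental_Theorem_Algebra"
    "HOL-Computational_Algebra.Formal_Power_Series"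
begin


lemma scaleC_zero_left [simp]: "scaleC 0 (x::'a::complex_banach_algebra_1) = 0"
proof -
  have "scaleC (0+0) x = scaleC 0 x + scaleC 0 x" by (rule scaleC_add_left)
  then show ?thesis by simp
qed

lemma scaleC_zero_right [simp]: "scaleC c (0::'a::complex_banach_algebra_1) = 0"
proof -
  have "scaleC c (0+0::'a) = scaleC c 0 + scaleC c 0" by (rule scaleC_add_right)
  then show ?thesis by simp
qed

lemma scaleC_minus_right: "scaleC c (- (x::'a::complex_banach_algebra_1)) = - scaleC c x"
proof -
  have "scaleC c (x + - x) = scaleC c x + scaleC c (-x)" by (rule scaleC_add_right)
  then show ?thesis by (simp add: eq_neg_iff_add_eq_0 add.commute)
qed

lemma scaleC_diff_right: "scaleC c ((x::'a::complex_banach_algebra_1) - y) = scaleC c x - scaleC c y"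
  using scaleC_add_right[of c x "-y"] by (simp add: scaleC_minus_right)

lemma scaleC_minus_left: "scaleC (- c) (x::'a::complex_banach_algebra_1) = - scaleC c x"
proof -
  have "scaleC (c + - c) x = scaleC c x + scaleC (-c) x" by (rule scaleC_add_left)
  then show ?thesis by (simp add: eq_neg_iff_add_eq_0 add.commute)
qed

lemma scaleC_diff_left: "scaleC (c - d) (x::'a::complex_banach_algebra_1) = scaleC c x - scaleC d x"
  using scaleC_add_left[of c "-d" x] by (simp add: scaleC_minus_left)

lemma scaleC_of_real: "scaleC (complex_of_real r) (x::'a::complex_banach_algebra_1) = scaleR r x"
  by (simp add: scaleR_scaleC)

lemma scaleC_sum_right: "scaleC c (sum f A) = (\<Sum>i\<in>A. scaleC c (f i::'a::complex_banach_algebra_1))"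
  by (induction A rule: infinite_finite_induct) (auto simp: scaleC_add_right)

lemma scaleC_sum_left: "scaleC (sum f A) (x::'a::complex_banach_algebra_1) = (\<Sum>i\<in>A. scaleC (f i) x)"
  by (induction A rule: infinite_finite_induct) (auto simp: scaleC_add_left)

lemma scaleC_1_mult: "scaleC c 1 * (x::'a::complex_banach_algebra_1) = scaleC c x"
  by (simp add: mult_scaleC_left)

lemma mult_scaleC_1: "(x::'a::complex_banach_algebra_1) * scaleC c 1 = scaleC c x"
  by (simp add: mult_scaleC_right)

lemma scaleC_mult_scaleC: "scaleC c (x::'a::complex_banach_algebra_1) * scaleC d y = scaleC (c*d) (x*y)"
  by (simp add: mult_scaleC_left mult_scaleC_right scaleC_scaleC mult.commute)

lemma scaleC_power: "(scaleC c (x::'a::complex_banach_algebra_1)) ^ n = scaleC (c^n) (x^n)"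
  by (induction n) (simp_all add: scaleC_mult_scaleC scaleC_one)

lemma scaleC_scaleR: "scaleC c (scaleR r (x::'a::complex_banach_algebra_1)) = scaleR r (scaleC c x)"
  by (simp add: scaleR_scaleC scaleC_scaleC mult.commute)

lemma bounded_bilinear_scaleC: "bounded_bilinear (scaleC :: complex \<Rightarrow> 'a::complex_banach_algebra_1 \<Rightarrow> 'a)"
proof
  show "scaleC (a + a') b = scaleC a b + scaleC a' (b::'a)" for a a' b by (rule scaleC_add_left)
  show "scaleC a (b + b') = scaleC a b + scaleC a (b'::'a)" for a b b' by (rule scaleC_add_right)
  show "scaleC (scaleR r a) b = scaleR r (scaleC a (b::'a))" for r a b
    by (simp add: scaleR_scaleC scaleC_scaleC scaleR_conv_of_real)
  show "scaleC a (scaleR r b) = scaleR r (scaleC a (b::'a))" for r a b by (rule scaleC_scaleR)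
  show "\<exists>K. \<forall>a (b::'a). norm (scaleC a b) \<le> norm a * norm b * K"
    by (rule exI[of _ 1]) (simp add: norm_scaleC)
qed

lemmas tendsto_scaleC = bounded_bilinear.tendsto[OF bounded_bilinear_scaleC]
lemmas continuous_on_scaleC = bounded_bilinear.continuous_on[OF bounded_bilinear_scaleC]

definition inv_el :: "'a::ring_1 \<Rightarrow> 'a" where
  "inv_el u = (SOME y. u * y = 1 \<and> y * u = 1)"

lemma inv_el_right: "invertible_elem u \<Longrightarrow> u * inv_el u = 1"
  unfolding invertible_elem_def inv_el_def by (metis (mono_tags, lifting) someI_ex)

lemma inv_el_left: "invertible_elem u \<Longrightarrow> inv_el u * u = 1"
  unfolding invertible_elem_def inv_el_def by (metis (mono_tags, lifting) someI_ex)

lemma invertibleI: "u * y = 1 \<Longrightarrow> y * u = 1 \<Longrightarrow> invertible_elem u"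
  unfolding invertible_elem_def by blast

lemma inv_el_unique: "u * y = 1 \<Longrightarrow> y * u = 1 \<Longrightarrow> inv_el u = y"
proof -
  assume a: "u * y = 1" "y * u = 1"
  then have i: "invertible_elem u" by (rule invertibleI)
  have "inv_el u = inv_el u * (u * y)" using a by simp
  also have "\<dots> = y" using inv_el_left[OF i] by (simp add: mult.assoc[symmetric])
  finally show ?thesis .
qed

lemma inv_el_unique_right: "invertible_elem u \<Longrightarrow> u * y = 1 \<Longrightarrow> y = inv_el u"
proof -
  assume i: "invertible_elem u" and a: "u * y = 1"
  have "inv_el u = inv_el u * (u * y)" using a by simp
  also have "\<dots> = y" using inv_el_left[OF i] by (simp add: mult.assoc[symmetric])
  finally show ?thesis by simp
qed

lemma inv_el_unique_left: "invertible_elem u \<Longrightarrow> y * u = 1 \<Longrightarrow> y = inv_el u"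
proof -
  assume i: "invertible_elem u" and a: "y * u = 1"
  have "inv_el u = (y * u) * inv_el u" using a by simp
  also have "\<dots> = y" using inv_el_right[OF i] by (simp add: mult.assoc)
  finally show ?thesis by simp
qed

lemma invertible_one [simp]: "invertible_elem (1::'a::ring_1)"
  by (rule invertibleI[of _ 1]) simp_all

lemma invertible_inv_el: "invertible_elem u \<Longrightarrow> invertible_elem (inv_el u)"
  using inv_el_left inv_el_right invertibleI by blast

lemma invertible_mult:
  "invertible_elem u \<Longrightarrow> invertible_elem v \<Longrightarrow> invertible_elem (u * v)"
  apply (rule invertibleI[of _ "inv_el v * inv_el u"])
  apply (metis inv_el_right mult.assoc mult_1_right)
  apply (metis inv_el_left mult.assoc mult_1_right)
  done

definition comm_el :: "'a::ring_1 \<Rightarrow> 'a \<Rightarrow> bool" where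
  "comm_el u v \<longleftrightarrow> u * v = v * u"

lemma comm_el_sym: "comm_el u v \<Longrightarrow> comm_el v u"
  by (simp add: comm_el_def)

lemma comm_el_refl [simp]: "comm_el u u" by (simp add: comm_el_def)
lemma comm_el_one [simp]: "comm_el 1 u" "comm_el u 1" by (simp_all add: comm_el_def)
lemma comm_el_zero [simp]: "comm_el 0 u" "comm_el u 0" by (simp_all add: comm_el_def)

lemma comm_el_add: "comm_el u v \<Longrightarrow> comm_el u w \<Longrightarrow> comm_el u (v + w)"
  by (simp add: comm_el_def algebra_simps)
lemma comm_el_diff: "comm_el u v \<Longrightarrow> comm_el u w \<Longrightarrow> comm_el u (v - w)"
  by (simp add: comm_el_def algebra_simps)
lemma comm_el_minus: "comm_el u v \<Longrightarrow> comm_el u (- v)"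
  by (simp add: comm_el_def algebra_simps)
lemma comm_el_mult: "comm_el u v \<Longrightarrow> comm_el u w \<Longrightarrow> comm_el u (v * w)"
  by (simp add: comm_el_def mult.assoc[symmetric]) (simp add: mult.assoc)
lemma comm_el_power: "comm_el u v \<Longrightarrow> comm_el u (v ^ n)"
  by (induction n) (simp_all add: comm_el_mult)
lemma comm_el_sum: "(\<And>i. i \<in> A \<Longrightarrow> comm_el u (f i)) \<Longrightarrow> comm_el u (sum f A)"
  by (induction A rule: infinite_finite_induct) (auto intro: comm_el_add)

lemma comm_el_inv_el: "invertible_elem v \<Longrightarrow> comm_el u v \<Longrightarrow> comm_el u (inv_el v)"
proof -
  assume i: "invertible_elem v" and c: "comm_el u v"
  have "inv_el v * u = inv_el v * u * (v * inv_el v)" using inv_el_right[OF i] by simp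
  also have "\<dots> = inv_el v * (u * v) * inv_el v" by (simp add: mult.assoc)
  also have "\<dots> = inv_el v * (v * u) * inv_el v" using c by (simp add: comm_el_def)
  also have "\<dots> = (inv_el v * v) * u * inv_el v" by (simp add: mult.assoc)
  also have "\<dots> = u * inv_el v" using inv_el_left[OF i] by simp
  finally show ?thesis by (simp add: comm_el_def)
qed

lemma invertible_comm_right:
  "u * w = 1 \<Longrightarrow> comm_el u w \<Longrightarrow> invertible_elem u"
  by (metis comm_el_def invertibleI)

lemma invertible_comm_prod:
  assumes "invertible_elem (u * v)" "comm_el u v"
  shows "invertible_elem u" "invertible_elem v"
proof -
  let ?w = "inv_el (u * v)"
  have c1: "comm_el (u * v) u" using assms(2) by (metis comm_el_def mult.assoc)
  have c2: "comm_el (u * v) v" using assms(2) by (metis comm_el_def mult.assoc)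
  have cu: "comm_el u ?w"
    using comm_el_inv_el[OF assms(1) comm_el_sym[OF c1]] .
  have cv: "comm_el v ?w"
    using comm_el_inv_el[OF assms(1) comm_el_sym[OF c2]] .
  have "u * (v * ?w) = 1" using inv_el_right[OF assms(1)] by (simp add: mult.assoc)
  moreover have "comm_el u (v * ?w)" using assms(2) cu by (simp add: comm_el_mult)
  ultimately show "invertible_elem u" by (rule invertible_comm_right)
  have "v * (u * ?w) = 1" using inv_el_right[OF assms(1)] assms(2)
    by (simp add: mult.assoc[symmetric] comm_el_def)
  moreover have "comm_el v (u * ?w)" using comm_el_sym[OF assms(2)] cv by (simp add: comm_el_mult)
  ultimately show "invertible_elem v" by (rule invertible_comm_right)
qed

lemma invertible_power: "invertible_elem u \<Longrightarrow> invertible_elem (u ^ n)"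
  by (induction n) (simp_all add: invertible_mult)

section \<open>Neumann series\<close>

lemma neumann:
  fixes u :: "'a::{real_normed_algebra_1,banach}"
  assumes s: "summable (\<lambda>n. u ^ n)"
  shows "(1 - u) * (\<Sum>n. u ^ n) = 1" "(\<Sum>n. u ^ n) * (1 - u) = 1"
proof -
  have h: "(\<Sum>n. u ^ Suc n) = (\<Sum>n. u ^ n) - 1"
    using suminf_split_head[OF s] by simp
  have "u * (\<Sum>n. u ^ n) = (\<Sum>n. u * u ^ n)" by (rule suminf_mult[OF s, symmetric])
  also have "\<dots> = (\<Sum>n. u ^ Suc n)" by simp
  finally have a: "u * (\<Sum>n. u ^ n) = (\<Sum>n. u ^ n) - 1" using h by simp
  have "(\<Sum>n. u ^ n) * u = (\<Sum>n. u ^ n * u)" by (rule suminf_mult2[OF s])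
  also have "\<dots> = (\<Sum>n. u ^ Suc n)" by (simp add: power_commutes)
  finally have b: "(\<Sum>n. u ^ n) * u = (\<Sum>n. u ^ n) - 1" using h by simp
  show "(1 - u) * (\<Sum>n. u ^ n) = 1" using a by (simp add: algebra_simps)
  show "(\<Sum>n. u ^ n) * (1 - u) = 1" using b by (simp add: algebra_simps)
qed

lemma neumann_invertible:
  fixes u :: "'a::{real_normed_algebra_1,banach}"
  assumes "summable (\<lambda>n. u ^ n)"
  shows "invertible_elem (1 - u)" "inv_el (1 - u) = (\<Sum>n. u ^ n)"
  using neumann[OF assms] by (auto intro: invertibleI inv_el_unique)

lemma summable_power_norm_less1:
  fixes u :: "'a::{real_normed_algebra_1,banach}"
  assumes "norm u < 1"
  shows "summable (\<lambda>n. norm (u ^ n))" "summable (\<lambda>n. u ^ n)"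
proof -
  have g: "summable (\<lambda>n. norm u ^ n)" using assms by (simp add: summable_geometric)
  show "summable (\<lambda>n. norm (u ^ n))"
    by (rule summable_comparison_test'[OF g]) (simp add: norm_power_ineq)
  then show "summable (\<lambda>n. u ^ n)" by (rule summable_norm_cancel)
qed

lemma neumann_norm:
  fixes u :: "'a::{real_normed_algebra_1,banach}"
  assumes "norm u < 1"
  shows "invertible_elem (1 - u)" "norm (inv_el (1 - u)) \<le> 1 / (1 - norm u)"
proof -
  note s = summable_power_norm_less1[OF assms]
  show "invertible_elem (1 - u)" using neumann_invertible[OF s(2)] by simp
  have g: "summable (\<lambda>n. norm u ^ n)" using assms by (simp add: summable_geometric)
  have "norm (\<Sum>n. u ^ n) \<le> (\<Sum>n. norm u ^ n)"
    by (rule norm_suminf_le[OF _ g]) (simp add: norm_power_ineq)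
  also have "\<dots> = 1 / (1 - norm u)" using assms by (simp add: suminf_geometric)
  finally show "norm (inv_el (1 - u)) \<le> 1 / (1 - norm u)"
    using neumann_invertible[OF s(2)] by simp
qed

lemma inv_near:
  fixes v h :: "'a::{real_normed_algebra_1,banach}"
  assumes v: "invertible_elem v" and h: "norm h * norm (inv_el v) \<le> 1/2"
  shows "invertible_elem (v + h)"
    "norm (inv_el (v + h)) \<le> 2 * norm (inv_el v)"
    "norm (inv_el (v + h) - inv_el v) \<le> 2 * norm (inv_el v) ^ 2 * norm h"
proof -
  let ?v' = "inv_el v"
  let ?w = "- (?v' * h)"
  have nw: "norm ?w \<le> 1/2"
    using h norm_mult_ineq[of ?v' h] by (simp add: mult.commute)
  then have nw1: "norm ?w < 1" by simp
  note N = neumann_norm[OF nw1]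
  let ?T = "inv_el (1 - ?w)"
  have vh: "v + h = v * (1 - ?w)" using inv_el_right[OF v]
    by (simp add: algebra_simps mult.assoc[symmetric])
  show i: "invertible_elem (v + h)" unfolding vh by (rule invertible_mult[OF v N(1)])
  have ie: "inv_el (v + h) = ?T * ?v'"
    apply (rule inv_el_unique)
    unfolding vh
     apply (metis N(1) inv_el_right v mult.assoc mult_1_left)
    apply (metis N(1) inv_el_left v mult.assoc mult_1_left)
    done
  have nT: "norm ?T \<le> 2"
  proof -
    have "1 / (1 - norm ?w) \<le> 2" using nw by (simp add: field_simps)
    then show ?thesis using N(2) by linarith
  qed
  show n2: "norm (inv_el (v + h)) \<le> 2 * norm ?v'"
    unfolding ie using norm_mult_ineq[of ?T ?v'] nT
    by (meson mult_right_mono norm_ge_zero order.trans)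
  have "inv_el (v + h) * (v - (v + h)) * ?v' = inv_el (v + h) * v * ?v' - inv_el (v + h) * (v + h) * ?v'"
    by (simp add: algebra_simps)
  also have "\<dots> = inv_el (v + h) - ?v'"
    by (simp add: inv_el_left[OF i] mult.assoc inv_el_right[OF v])
  finally have "inv_el (v + h) - ?v' = inv_el (v + h) * (v - (v + h)) * ?v'" by simp
  also have "\<dots> = - (inv_el (v + h) * h * ?v')" by (simp add: algebra_simps)
  finally have eq: "inv_el (v + h) - ?v' = - (inv_el (v + h) * h * ?v')" .
  have "norm (inv_el (v + h) * h * ?v') \<le> norm (inv_el (v + h)) * norm h * norm ?v'"
    by (metis norm_mult_ineq mult_right_mono norm_ge_zero order.trans)
  also have "\<dots> \<le> (2 * norm ?v') * norm h * norm ?v'"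
    by (intro mult_right_mono n2) simp_all
  finally show "norm (inv_el (v + h) - ?v') \<le> 2 * norm ?v' ^ 2 * norm h"
    unfolding eq by (simp add: power2_eq_square algebra_simps)
qed

lemma tendsto_inv_el:
  fixes g :: "'b \<Rightarrow> 'a::{real_normed_algebra_1,banach}"
  assumes g: "(g \<longlongrightarrow> v) F" and v: "invertible_elem v"
  shows "((\<lambda>z. inv_el (g z)) \<longlongrightarrow> inv_el v) F"
proof -
  define K where "K = 2 * norm (inv_el v) ^ 2"
  have pos: "0 < 1 / (2 * (norm (inv_el v) + 1))" by (smt (verit) norm_ge_zero divide_pos_pos)
  have ev: "eventually (\<lambda>z. dist (g z) v < 1 / (2 * (norm (inv_el v) + 1))) F"
    using g pos by (rule tendstoD)
  have ev2: "eventually (\<lambda>z. norm (inv_el (g z) - inv_el v) \<le> norm (g z - v) * K) F"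
  proof (rule eventually_mono[OF ev])
    fix z assume d: "dist (g z) v < 1 / (2 * (norm (inv_el v) + 1))"
    let ?h = "g z - v"
    have "norm ?h * norm (inv_el v) \<le> norm ?h * (norm (inv_el v) + 1)"
      by (simp add: mult_left_mono)
    also have "\<dots> \<le> 1/2" using d
      by (simp add: dist_norm field_simps add_pos_nonneg)
    finally have hh: "norm ?h * norm (inv_el v) \<le> 1/2" .
    have "g z = v + ?h" by simp
    then show "norm (inv_el (g z) - inv_el v) \<le> norm (g z - v) * K"
      using inv_near(3)[OF v hh] unfolding K_def by (simp add: mult.commute)
  qed
  have "((\<lambda>z. g z - v) \<longlongrightarrow> 0) F" using g by (simp add: LIM_zero)
  then have "((\<lambda>z. inv_el (g z) - inv_el v) \<longlongrightarrow> 0) F"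
    by (rule tendsto_0_le[OF _ ev2])
  then show ?thesis by (simp add: LIM_zero_iff)
qed

lemma continuous_on_inv_el:
  fixes g :: "'b::topological_space \<Rightarrow> 'a::{real_normed_algebra_1,banach}"
  assumes "continuous_on U g" "\<And>z. z \<in> U \<Longrightarrow> invertible_elem (g z)"
  shows "continuous_on U (\<lambda>z. inv_el (g z))"
  using assms unfolding continuous_on_def by (auto intro: tendsto_inv_el)

lemma open_invertible:
  fixes g :: "'b::topological_space \<Rightarrow> 'a::{real_normed_algebra_1,banach}"
  assumes g: "(g \<longlongrightarrow> v) F" and v: "invertible_elem v"
  shows "eventually (\<lambda>z. invertible_elem (g z)) F"
proof -
  have pos: "0 < 1 / (2 * (norm (inv_el v) + 1))" by (smt (verit) norm_ge_zero divide_pos_pos)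
  have ev: "eventually (\<lambda>z. dist (g z) v < 1 / (2 * (norm (inv_el v) + 1))) F"
    using g pos by (rule tendstoD)
  show ?thesis
  proof (rule eventually_mono[OF ev])
    fix z assume d: "dist (g z) v < 1 / (2 * (norm (inv_el v) + 1))"
    let ?h = "g z - v"
    have "norm ?h * norm (inv_el v) \<le> norm ?h * (norm (inv_el v) + 1)"
      by (simp add: mult_left_mono)
    also have "\<dots> \<le> 1/2" using d
      by (simp add: dist_norm field_simps add_pos_nonneg)
    finally have hh: "norm ?h * norm (inv_el v) \<le> 1/2" .
    have "g z = v + ?h" by simp
    then show "invertible_elem (g z)" using inv_near(1)[OF v hh] by simp
  qed
qed

definition small :: "'a::real_normed_algebra_1 \<Rightarrow> bool" where
  "small u \<longleftrightarrow> (\<forall>\<rho>>0. \<exists>C. \<forall>m. norm (u ^ m) \<le> C * \<rho> ^ m)"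

lemma smallD: "small u \<Longrightarrow> \<rho> > 0 \<Longrightarrow> \<exists>C. \<forall>m. norm (u ^ m) \<le> C * \<rho> ^ m"
  by (simp add: small_def)

lemma small_const_nonneg: "norm (u ^ m) \<le> C * \<rho> ^ m \<Longrightarrow> \<rho> > 0 \<Longrightarrow> m = 0 \<Longrightarrow> C \<ge> 1"
  for u :: "'a::real_normed_algebra_1" by simp

lemma comm_el_power_mult: "comm_el u v \<Longrightarrow> (u * v) ^ m = u ^ m * v ^ m"
proof (induction m)
  case (Suc m)
  have c: "comm_el v (u ^ m)" using comm_el_power[OF comm_el_sym[OF Suc.prems]] .
  have "(u * v) ^ Suc m = u * v * (u ^ m * v ^ m)" using Suc by simp
  also have "\<dots> = u * (v * u ^ m) * v ^ m" by (simp add: mult.assoc)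
  also have "\<dots> = u * (u ^ m * v) * v ^ m" using c by (simp add: comm_el_def)
  also have "\<dots> = u ^ Suc m * v ^ Suc m" by (simp add: mult.assoc power_commutes)
  finally show ?case .
qed simp

lemma comm_el_powers: "comm_el u v \<Longrightarrow> comm_el (u ^ i) (v ^ j)"
  by (meson comm_el_power comm_el_sym)

lemma small_summable:
  fixes u :: "'a::{real_normed_algebra_1,banach}"
  assumes "small u"
  shows "summable (\<lambda>n. norm (u ^ n))" "summable (\<lambda>n. u ^ n)"
proof -
  obtain C where C: "\<And>m. norm (u ^ m) \<le> C * (1/2) ^ m" using smallD[OF assms, of "1/2"] by auto
  have "summable (\<lambda>m. C * (1/2::real) ^ m)" by (simp add: summable_geometric)
  then show "summable (\<lambda>n. norm (u ^ n))"
    by (rule summable_comparison_test') (use C in simp)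
  then show "summable (\<lambda>n. u ^ n)" by (rule summable_norm_cancel)
qed

lemma small_invertible:
  fixes u :: "'a::{real_normed_algebra_1,banach}"
  shows "small u \<Longrightarrow> invertible_elem (1 - u)"
  using small_summable neumann_invertible by blast

lemma small_mult_comm:
  fixes u :: "'a::real_normed_algebra_1"
  assumes u: "small u" and c: "comm_el u v"
  shows "small (u * v)"
  unfolding small_def
proof (intro allI impI)
  fix \<rho> :: real assume r: "\<rho> > 0"
  let ?r = "\<rho> / (norm v + 1)"
  have r': "?r > 0" using r by (simp add: add_nonneg_pos)
  obtain C where C: "\<And>m. norm (u ^ m) \<le> C * ?r ^ m" using smallD[OF u r'] by auto
  have C0: "C \<ge> 0" using C[of 0] by simp
  show "\<exists>C. \<forall>m. norm ((u * v) ^ m) \<le> C * \<rho> ^ m"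
  proof (intro exI allI)
    fix m
    have "norm ((u * v) ^ m) = norm (u ^ m * v ^ m)" by (simp add: comm_el_power_mult[OF c])
    also have "\<dots> \<le> norm (u ^ m) * norm (v ^ m)" by (rule norm_mult_ineq)
    also have "\<dots> \<le> (C * ?r ^ m) * (norm v + 1) ^ m"
    proof (rule mult_mono)
      show "norm (v ^ m) \<le> (norm v + 1) ^ m"
        using norm_power_ineq[of v m] power_mono[of "norm v" "norm v + 1" m]
        by (meson less_add_one less_imp_le norm_ge_zero order.trans)
      show "0 \<le> C * ?r ^ m" using C0 r' by simp
    qed (use C in auto)
    also have "\<dots> = C * (?r * (norm v + 1)) ^ m" by (metis mult.assoc power_mult_distrib)
    also have "?r * (norm v + 1) = \<rho>"
    proof - have "norm v + 1 > 0" by (smt (verit) norm_ge_zero) then show ?thesis by simp qed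
    finally show "norm ((u * v) ^ m) \<le> C * \<rho> ^ m" .
  qed
qed

lemma small_mult_comm':
  fixes u :: "'a::real_normed_algebra_1"
  assumes u: "small u" and c: "comm_el u v"
  shows "small (v * u)"
  using small_mult_comm[OF assms] c by (simp add: comm_el_def)

lemma small_scaleR:
  fixes u :: "'a::real_normed_algebra_1"
  assumes u: "small u"
  shows "small (scaleR c u)"
proof -
  have "scaleR c u = u * scaleR c 1" by simp
  moreover have "comm_el u (scaleR c 1)" by (simp add: comm_el_def)
  ultimately show ?thesis using small_mult_comm[OF u] by metis
qed

lemma small_minus:
  fixes u :: "'a::real_normed_algebra_1"
  shows "small u \<Longrightarrow> small (- u)"
  using small_scaleR[of u "-1"] by simp

lemma small_scaleC:
  fixes u :: "'a::complex_banach_algebra_1"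
  assumes u: "small u"
  shows "small (scaleC c u)"
proof -
  have "scaleC c u = u * scaleC c 1" by (simp add: mult_scaleC_1)
  moreover have "comm_el u (scaleC c 1)" by (simp add: comm_el_def mult_scaleC_1 scaleC_1_mult)
  ultimately show ?thesis using small_mult_comm[OF u] by metis
qed

lemma orth_power_add:
  fixes u v :: "'a::ring_1"
  assumes "u * v = 0" "v * u = 0"
  shows "m > 0 \<Longrightarrow> (u + v) ^ m = u ^ m + v ^ m"
proof (induction m)
  case (Suc m)
  show ?case
  proof (cases "m = 0")
    case True then show ?thesis by simp
  next
    case False
    then have "(u + v) ^ Suc m = (u + v) * (u ^ m + v ^ m)" using Suc by simp
    also have "\<dots> = u ^ Suc m + u * v ^ m + v * u ^ m + v ^ Suc m"
      by (simp add: algebra_simps)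
    also have "u * v ^ m = 0" using False assms(1)
      by (metis mult_zero_left power_eq_if mult.assoc)
    also have "v * u ^ m = 0" using False assms(2)
      by (metis mult_zero_left power_eq_if mult.assoc)
    finally show ?thesis by simp
  qed
qed simp

lemma small_orth_add:
  fixes u v :: "'a::real_normed_algebra_1"
  assumes u: "small u" and v: "small v" and o: "u * v = 0" "v * u = 0"
  shows "small (u + v)"
  unfolding small_def
proof (intro allI impI)
  fix \<rho> :: real assume r: "\<rho> > 0"
  obtain C1 where C1: "\<And>m. norm (u ^ m) \<le> C1 * \<rho> ^ m" using smallD[OF u r] by auto
  obtain C2 where C2: "\<And>m. norm (v ^ m) \<le> C2 * \<rho> ^ m" using smallD[OF v r] by auto
  have "C2 \<ge> 1" using C2[of 0] by simp
  show "\<exists>C. \<forall>m. norm ((u + v) ^ m) \<le> C * \<rho> ^ m"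
  proof (intro exI allI)
    fix m
    show "norm ((u + v) ^ m) \<le> (C1 + C2) * \<rho> ^ m"
    proof (cases "m = 0")
      case True then show ?thesis using C1[of 0] \<open>C2 \<ge> 1\<close> by simp
    next
      case False
      then have "norm ((u + v) ^ m) = norm (u ^ m + v ^ m)" using orth_power_add[OF o] by simp
      also have "\<dots> \<le> norm (u ^ m) + norm (v ^ m)" by (rule norm_triangle_ineq)
      also have "\<dots> \<le> (C1 + C2) * \<rho> ^ m" using C1[of m] C2[of m] by (simp add: algebra_simps)
      finally show ?thesis .
    qed
  qed
qed

lemma small_root:
  fixes w :: "'a::real_normed_algebra_1"
  assumes n: "n > 0" and s: "small (w ^ n)"
  shows "small w"
  unfolding small_def
proof (intro allI impI)
  fix \<rho> :: real assume r: "\<rho> > 0"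
  obtain C where C: "\<And>q. norm ((w ^ n) ^ q) \<le> C * (\<rho> ^ n) ^ q"
    using smallD[OF s, of "\<rho> ^ n"] r by auto
  have C0: "C \<ge> 0" using C[of 0] by simp
  define B where "B = (\<Sum>i<n. (norm w / \<rho>) ^ i)"
  show "\<exists>C. \<forall>m. norm (w ^ m) \<le> C * \<rho> ^ m"
  proof (intro exI allI)
    fix m
    define q where "q = m div n"
    define r0 where "r0 = m mod n"
    have m: "m = n * q + r0" unfolding q_def r0_def by simp
    have r0n: "r0 < n" unfolding r0_def using n by simp
    have "(norm w / \<rho>) ^ r0 \<le> B"
      unfolding B_def by (rule member_le_sum) (use r0n r in auto)
    then have "norm w ^ r0 \<le> B * \<rho> ^ r0" using r by (simp add: power_divide field_simps)
    have "norm (w ^ m) = norm ((w ^ n) ^ q * w ^ r0)" by (simp add: m power_add power_mult)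
    also have "\<dots> \<le> norm ((w ^ n) ^ q) * norm (w ^ r0)" by (rule norm_mult_ineq)
    also have "\<dots> \<le> (C * (\<rho> ^ n) ^ q) * (B * \<rho> ^ r0)"
    proof (rule mult_mono)
      show "norm (w ^ r0) \<le> B * \<rho> ^ r0"
        using norm_power_ineq[of w r0] \<open>norm w ^ r0 \<le> B * \<rho> ^ r0\<close> by linarith
    qed (use C C0 r in auto)
    also have "\<dots> = (C * B) * \<rho> ^ m" by (simp add: m power_add power_mult)
    finally show "norm (w ^ m) \<le> (C * B) * \<rho> ^ m" .
  qed
qed

lemma small_not_invertible:
  fixes u :: "'a::real_normed_algebra_1"
  assumes s: "small u"
  shows "\<not> invertible_elem u"
proof
  assume i: "invertible_elem u"
  define w where "w = inv_el u"
  have uw: "u * w = 1" "w * u = 1" unfolding w_def using inv_el_right[OF i] inv_el_left[OF i] by auto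
  have c: "comm_el u w" using uw by (simp add: comm_el_def)
  have pw: "u ^ m * w ^ m = 1" for m
    using comm_el_power_mult[OF c, of m, symmetric] uw by simp
  let ?r = "1 / (2 * (norm w + 1))"
  have r: "?r > 0" by (smt (verit) norm_ge_zero divide_pos_pos)
  obtain C where C: "\<And>m. norm (u ^ m) \<le> C * ?r ^ m" using smallD[OF s r] by auto
  have C0: "C \<ge> 0" using C[of 0] by simp
  have key: "1 \<le> C * (1/2) ^ m" for m
  proof -
    have "1 = norm (u ^ m * w ^ m)" using pw by simp
    also have "\<dots> \<le> norm (u ^ m) * norm (w ^ m)" by (rule norm_mult_ineq)
    also have "\<dots> \<le> (C * ?r ^ m) * (norm w + 1) ^ m"
    proof (rule mult_mono)
      show "norm (w ^ m) \<le> (norm w + 1) ^ m"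
        using norm_power_ineq[of w m] power_mono[of "norm w" "norm w + 1" m]
        by (meson less_add_one less_imp_le norm_ge_zero order.trans)
      show "0 \<le> C * ?r ^ m" using C0 r by simp
    qed (use C in auto)
    also have "\<dots> = C * (?r * (norm w + 1)) ^ m" by (metis mult.assoc power_mult_distrib)
    also have "?r * (norm w + 1) = 1/2"
    proof - have "norm w + 1 > 0" by (smt (verit) norm_ge_zero) then show ?thesis by simp qed
    finally show ?thesis .
  qed
  obtain m where "(1/2::real) ^ m < 1 / (C + 1)"
    using real_arch_pow_inv[of "1 / (C + 1)" "1/2"] C0 by auto
  then have "C * (1/2) ^ m < C * (1 / (C + 1)) \<or> C = 0" using C0
    by (metis mult_strict_left_mono order_le_less)
  moreover have "C * (1 / (C + 1)) < 1" using C0 by (simp add: field_simps)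
  ultimately show False using key[of m] by auto
qed

lemma invertible_scaleC:
  fixes w :: "'a::complex_banach_algebra_1"
  assumes "z \<noteq> 0" "invertible_elem w"
  shows "invertible_elem (scaleC z w)"
  apply (rule invertibleI[of _ "scaleC (1/z) (inv_el w)"])
  using assms by (simp_all add: scaleC_mult_scaleC inv_el_right inv_el_left scaleC_one)

lemma small_qnil:
  fixes u :: "'a::complex_banach_algebra_1"
  assumes s: "small u"
  shows "quasinilpotent u"
proof -
  have "z \<notin> spectrum u" if z: "z \<noteq> 0" for z
  proof -
    have "small (scaleC (1/z) u)" by (rule small_scaleC[OF s])
    then have i: "invertible_elem (1 - scaleC (1/z) u)" by (rule small_invertible)
    have "scaleC z 1 - u = scaleC z (1 - scaleC (1/z) u)"
      using z by (simp add: scaleC_diff_right scaleC_scaleC scaleC_one)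
    then show ?thesis using invertible_scaleC[OF z i] by (simp add: spectrum_def)
  qed
  moreover have "0 \<in> spectrum u"
  proof -
    have "\<not> invertible_elem u" by (rule small_not_invertible[OF s])
    then have "\<not> invertible_elem (- u)"
      using invertibleI[of u "- inv_el (-u)"] inv_el_right[of "-u"] inv_el_left[of "-u"] by auto
    then show ?thesis by (simp add: spectrum_def)
  qed
  ultimately show ?thesis unfolding quasinilpotent_def by blast
qed

lemma qnil_invertible:
  fixes y :: "'a::complex_banach_algebra_1"
  shows "quasinilpotent y \<Longrightarrow> z \<noteq> 0 \<Longrightarrow> invertible_elem (scaleC z 1 - y)"
  unfolding quasinilpotent_def spectrum_def by blast

lemma cis_minus_one_bound: "cmod (cis t - 1) \<le> \<bar>t\<bar>"
proof -
  have "(cmod (cis t - 1))\<^sup>2 = (cos t - 1)\<^sup>2 + (sin t)\<^sup>2" by (simp add: cmod_power2)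
  also have "\<dots> = 2 - 2 * cos t" using sin_cos_squared_add[of t]
    by (simp add: power2_eq_square algebra_simps)
  also have "cos t = 1 - 2 * sin (t/2) ^ 2" using cos_double_sin[of "t/2"] by simp
  finally have e: "(cmod (cis t - 1))\<^sup>2 = 4 * (sin (t/2))\<^sup>2" by simp
  have "\<bar>sin (t/2)\<bar> \<le> \<bar>t/2\<bar>" by (rule abs_sin_x_le_abs_x)
  then have "(sin (t/2))\<^sup>2 \<le> (t/2)\<^sup>2"
    by (metis abs_ge_zero power2_abs power_mono)
  then have "(cmod (cis t - 1))\<^sup>2 \<le> t\<^sup>2" using e by (simp add: power2_eq_square)
  then show ?thesis by (metis abs_ge_zero power2_abs norm_ge_zero power2_le_imp_le)
qed

definition om :: "nat \<Rightarrow> complex" where "om j = cis (2 * pi / 2 ^ j)"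

lemma om_Suc_sq: "om (Suc j) ^ 2 = om j"
  using Complex.DeMoivre[of "2 * pi / 2 ^ Suc j" 2] by (simp add: om_def)

lemma om_Suc_pow: "om (Suc j) ^ (2 ^ j) = -1"
  using Complex.DeMoivre[of "2 * pi / 2 ^ Suc j" "2^j"] by (simp add: om_def)

lemma norm_om_pow [simp]: "cmod (om j ^ k) = 1"
  unfolding om_def by (simp add: norm_power)

lemma om_Suc_bound: "cmod (om (Suc j) - 1) \<le> pi / 2 ^ j"
  using cis_minus_one_bound[of "2 * pi / 2 ^ Suc j"] unfolding om_def by simp

lemma sum_split_2: "(\<Sum>k<2 * n. g k) = (\<Sum>i<n. g (2 * i)) + (\<Sum>i<n. g (2 * i + 1))"
  for g :: "nat \<Rightarrow> 'b::comm_monoid_add"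
  by (induction n) (simp_all add: algebra_simps)

locale qn =
  fixes x :: "'a::complex_banach_algebra_1"
  assumes inv: "\<And>\<mu>. \<mu> \<noteq> 0 \<Longrightarrow> invertible_elem (scaleC \<mu> 1 - x)"
begin

definition R :: "complex \<Rightarrow> 'a" where "R \<mu> = inv_el (scaleC \<mu> 1 - x)"
definition fR :: "complex \<Rightarrow> 'a" where "fR \<mu> = scaleC \<mu> (R \<mu>)"
definition Phi :: "nat \<Rightarrow> complex \<Rightarrow> 'a" where
  "Phi j l = scaleR (1 / 2 ^ j) (\<Sum>k<2^j. fR (l * om j ^ k))"
definition uu :: "nat \<Rightarrow> complex \<Rightarrow> 'a" where
  "uu j l = scaleC ((1 / l) ^ (2 ^ j)) (x ^ (2 ^ j))"

lemma R_right: "\<mu> \<noteq> 0 \<Longrightarrow> (scaleC \<mu> 1 - x) * R \<mu> = 1"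
  unfolding R_def by (rule inv_el_right[OF inv])
lemma R_left: "\<mu> \<noteq> 0 \<Longrightarrow> R \<mu> * (scaleC \<mu> 1 - x) = 1"
  unfolding R_def by (rule inv_el_left[OF inv])

lemma comm_x_scaleC1: "comm_el y (scaleC c 1)" for y :: 'a
  by (simp add: comm_el_def scaleC_1_mult mult_scaleC_1)

lemma comm_R: "\<mu> \<noteq> 0 \<Longrightarrow> comm_el x (R \<mu>)"
  unfolding R_def by (intro comm_el_inv_el inv comm_el_diff comm_x_scaleC1 comm_el_refl)

lemma comm_fR: "comm_el x (fR \<mu>)"
proof (cases "\<mu> = 0")
  case True then show ?thesis by (simp add: fR_def)
next
  case False
  then show ?thesis using comm_R[OF False]
    by (simp add: fR_def comm_el_def mult_scaleC_left mult_scaleC_right)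
qed

lemma fR_inv: "\<mu> \<noteq> 0 \<Longrightarrow> fR \<mu> * (1 - scaleC (1/\<mu>) x) = 1"
proof -
  assume m: "\<mu> \<noteq> 0"
  have "1 - scaleC (1/\<mu>) x = scaleC (1/\<mu>) (scaleC \<mu> 1 - x)"
    using m by (simp add: scaleC_diff_right scaleC_scaleC scaleC_one)
  then have "fR \<mu> * (1 - scaleC (1/\<mu>) x) = scaleC (\<mu> * (1/\<mu>)) (R \<mu> * (scaleC \<mu> 1 - x))"
    by (simp add: fR_def scaleC_mult_scaleC)
  also have "\<dots> = 1" using m R_left[OF m] by (simp add: scaleC_one)
  finally show ?thesis .
qed

lemma comm_Phi: "comm_el x (Phi j l)"
  unfolding Phi_def
  by (simp add: comm_el_def mult_scaleR_right comm_el_sum[of _ x, unfolded comm_el_def] comm_fR[unfolded comm_el_def])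

lemma comm_uu: "comm_el y x \<Longrightarrow> comm_el y (uu j l)"
  unfolding uu_def
  by (metis comm_el_def comm_el_power mult_scaleC_left mult_scaleC_right)

lemma Phi_0: "Phi 0 l = fR l"
  by (simp add: Phi_def)

lemma uu_0: "uu 0 l = scaleC (1/l) x"
  by (simp add: uu_def)

lemma Phi_Suc: "Phi (Suc j) l = scaleR (1/2) (Phi j l + Phi j (l * om (Suc j)))"
proof -
  have "(\<Sum>k<2^Suc j. fR (l * om (Suc j) ^ k))
      = (\<Sum>i<2^j. fR (l * om (Suc j) ^ (2*i))) + (\<Sum>i<2^j. fR (l * om (Suc j) ^ (2*i+1)))"
    using sum_split_2[of "\<lambda>k. fR (l * om (Suc j) ^ k)" "2^j"] by simp
  also have "(\<Sum>i<2^j. fR (l * om (Suc j) ^ (2*i))) = (\<Sum>i<2^j. fR (l * om j ^ i))"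
    by (simp add: power_mult om_Suc_sq)
  also have "(\<Sum>i<2^j. fR (l * om (Suc j) ^ (2*i+1))) = (\<Sum>i<2^j. fR (l * om (Suc j) * om j ^ i))"
  proof -
    have pt: "om (Suc j) ^ (2*i+1) = om (Suc j) * om j ^ i" for i
      by (simp add: power_add power_mult om_Suc_sq)
    show ?thesis by (intro sum.cong refl) (simp only: pt mult.assoc)
  qed
  finally show ?thesis
    by (simp add: Phi_def scaleR_add_right)
qed

lemma uu_rot: "uu j (l * om (Suc j)) = - uu j l"
proof -
  have "(1 / (l * om (Suc j))) ^ 2 ^ j = - ((1 / l) ^ 2 ^ j)"
    by (simp add: power_mult_distrib power_divide om_Suc_pow)
  then show ?thesis by (simp add: uu_def scaleC_minus_left)
qed

lemma uu_Suc: "uu (Suc j) l = uu j l * uu j l"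
proof -
  have e: "(2::nat) ^ Suc j = 2 ^ j * 2" by simp
  show ?thesis unfolding uu_def e power_mult scaleC_mult_scaleC by (simp only: power2_eq_square)
qed

lemma Phi_inv: "l \<noteq> 0 \<Longrightarrow> Phi j l * (1 - uu j l) = 1"
proof (induction j arbitrary: l)
  case 0
  then show ?case by (simp add: Phi_0 uu_0 fR_inv)
next
  case (Suc j)
  let ?u = "uu j l"
  have l2: "l * om (Suc j) \<noteq> 0" using Suc.prems unfolding om_def by simp
  have h1: "Phi j l * (1 - ?u) = 1" by (rule Suc.IH[OF Suc.prems])
  have h2: "Phi j (l * om (Suc j)) * (1 + ?u) = 1" using Suc.IH[OF l2] by (simp add: uu_rot)
  have f: "1 - ?u * ?u = (1 - ?u) * (1 + ?u)" "1 - ?u * ?u = (1 + ?u) * (1 - ?u)"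
    by (simp_all add: algebra_simps)
  have e1: "Phi j l * (1 - ?u * ?u) = 1 + ?u"
    using h1 by (simp add: f(1) mult.assoc[symmetric])
  have e2: "Phi j (l * om (Suc j)) * (1 - ?u * ?u) = 1 - ?u"
    using h2 by (simp add: f(2) mult.assoc[symmetric])
  have "Phi (Suc j) l * (1 - uu (Suc j) l)
      = scaleR (1/2) (Phi j l * (1 - ?u * ?u) + Phi j (l * om (Suc j)) * (1 - ?u * ?u))"
    by (simp add: Phi_Suc uu_Suc distrib_right)
  also have "\<dots> = scaleR (1/2) ((1 + ?u) + (1 - ?u))" by (simp only: e1 e2)
  also have "(1 + ?u) + (1 - ?u) = scaleR 2 1" by (simp add: scaleR_2)
  also have "scaleR (1/2) (scaleR 2 (1::'a)) = 1" by simp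
  finally show ?case .
qed


lemma Phi_comm_inv: "l \<noteq> 0 \<Longrightarrow> (1 - uu j l) * Phi j l = 1"
proof -
  assume l: "l \<noteq> 0"
  have "comm_el (Phi j l) (uu j l)" by (rule comm_uu[OF comm_el_sym[OF comm_Phi]])
  then have "(1 - uu j l) * Phi j l = Phi j l * (1 - uu j l)"
    by (simp add: comm_el_def algebra_simps)
  then show ?thesis using Phi_inv[OF l] by simp
qed

lemma om_ne0 [simp]: "om j \<noteq> 0" unfolding om_def by simp

lemma Phi_Suc_mult: "l \<noteq> 0 \<Longrightarrow> Phi (Suc j) l = Phi j l * Phi j (l * om (Suc j))"
proof -
  assume l: "l \<noteq> 0"
  let ?u = "uu j l" and ?P = "Phi j l" and ?Q = "Phi j (l * om (Suc j))"
  have l2: "l * om (Suc j) \<noteq> 0" using l by simp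
  have hP: "(1 - ?u) * ?P = 1" by (rule Phi_comm_inv[OF l])
  have hQ: "(1 + ?u) * ?Q = 1" using Phi_comm_inv[OF l2, of j] by (simp add: uu_rot)
  have f: "1 - ?u * ?u = (1 + ?u) * (1 - ?u)" by (simp add: algebra_simps)
  have a: "(1 - ?u * ?u) * (?P * ?Q) = 1"
    unfolding f by (simp add: mult.assoc[symmetric]) (simp add: mult.assoc hP hQ)
  have b: "Phi (Suc j) l * (1 - ?u * ?u) = 1" using Phi_inv[OF l, of "Suc j"] by (simp add: uu_Suc)
  have "Phi (Suc j) l = Phi (Suc j) l * ((1 - ?u * ?u) * (?P * ?Q))" using a by simp
  also have "\<dots> = ?P * ?Q" using b by (simp add: mult.assoc[symmetric])
  finally show ?thesis .
qed

lemma R_bound: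
  assumes r1: "0 < r1"
  shows "\<exists>M\<ge>0. \<forall>\<mu>. r1 \<le> cmod \<mu> \<and> cmod \<mu> \<le> r2 \<longrightarrow> norm (R \<mu>) \<le> M"
proof -
  define K where "K = cball (0::complex) r2 \<inter> - ball 0 r1"
  have K: "K = {\<mu>. r1 \<le> cmod \<mu> \<and> cmod \<mu> \<le> r2}" unfolding K_def by auto
  have cK: "compact K" unfolding K_def
    by (intro compact_Int_closed compact_cball closed_Compl open_ball)
  have nz: "\<mu> \<in> K \<Longrightarrow> \<mu> \<noteq> 0" for \<mu> using r1 unfolding K by auto
  have cont: "continuous_on K (\<lambda>\<mu>. scaleC \<mu> (1::'a) - x)"
    by (intro continuous_on_diff continuous_on_scaleC continuous_on_id continuous_on_const)
  have "continuous_on K R"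
    unfolding R_def by (rule continuous_on_inv_el[OF cont inv[OF nz]])
  then have "compact (R ` K)" using cK by (rule compact_continuous_image)
  then have "bounded (R ` K)" by (rule compact_imp_bounded)
  then obtain a where a: "\<forall>y\<in>R ` K. norm y \<le> a" by (auto simp: bounded_iff)
  show ?thesis
    by (rule exI[of _ "max a 0"]) (use a in \<open>auto simp: K\<close>)
qed

lemma R_diff: "\<mu> \<noteq> 0 \<Longrightarrow> \<mu>' \<noteq> 0 \<Longrightarrow> R \<mu> - R \<mu>' = scaleC (\<mu>' - \<mu>) (R \<mu> * R \<mu>')"
proof -
  assume m: "\<mu> \<noteq> 0" "\<mu>' \<noteq> 0"
  have "R \<mu> * ((scaleC \<mu>' 1 - x) - (scaleC \<mu> 1 - x)) * R \<mu>'
      = R \<mu> * ((scaleC \<mu>' 1 - x) * R \<mu>') - (R \<mu> * (scaleC \<mu> 1 - x)) * R \<mu>'"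
    by (simp add: algebra_simps)
  also have "\<dots> = R \<mu> - R \<mu>'" using R_right[OF m(2)] R_left[OF m(1)] by simp
  finally have "R \<mu> - R \<mu>' = R \<mu> * ((scaleC \<mu>' 1 - x) - (scaleC \<mu> 1 - x)) * R \<mu>'" by simp
  also have "(scaleC \<mu>' 1 - x) - (scaleC \<mu> 1 - x) = scaleC (\<mu>' - \<mu>) (1::'a)"
    by (simp add: scaleC_diff_left)
  also have "R \<mu> * scaleC (\<mu>' - \<mu>) 1 * R \<mu>' = scaleC (\<mu>' - \<mu>) (R \<mu> * R \<mu>')"
    by (simp add: mult_scaleC_1 mult_scaleC_left)
  finally show ?thesis .
qed

lemma fR_lip:
  assumes r1: "0 < r1" and r12: "r1 \<le> r2"
  shows "\<exists>L\<ge>0. \<forall>\<mu> \<mu>'. r1 \<le> cmod \<mu> \<and> cmod \<mu> \<le> r2 \<longrightarrow> r1 \<le> cmod \<mu>' \<and> cmod \<mu>' \<le> r2 \<longrightarrow>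
            norm (fR \<mu> - fR \<mu>') \<le> L * cmod (\<mu> - \<mu>')"
proof -
  obtain M where M0: "M \<ge> 0" and M: "\<And>\<mu>. r1 \<le> cmod \<mu> \<and> cmod \<mu> \<le> r2 \<Longrightarrow> norm (R \<mu>) \<le> M"
    using R_bound[OF r1, of r2] by auto
  show ?thesis
  proof (intro exI[of _ "r2 * M * M + M"] conjI allI impI)
    show "0 \<le> r2 * M * M + M" using r1 r12 M0 by simp
    fix \<mu> \<mu>' assume a: "r1 \<le> cmod \<mu> \<and> cmod \<mu> \<le> r2" and b: "r1 \<le> cmod \<mu>' \<and> cmod \<mu>' \<le> r2"
    have m: "\<mu> \<noteq> 0" "\<mu>' \<noteq> 0" using a b r1 by auto
    have "fR \<mu> - fR \<mu>' = scaleC \<mu> (R \<mu> - R \<mu>') + scaleC (\<mu> - \<mu>') (R \<mu>')"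
      by (simp add: fR_def scaleC_diff_right scaleC_diff_left)
    also have "\<dots> = scaleC \<mu> (scaleC (\<mu>' - \<mu>) (R \<mu> * R \<mu>')) + scaleC (\<mu> - \<mu>') (R \<mu>')"
      by (simp add: R_diff[OF m])
    finally have e: "fR \<mu> - fR \<mu>' = \<dots>" .
    have n1: "norm (scaleC \<mu> (scaleC (\<mu>' - \<mu>) (R \<mu> * R \<mu>'))) \<le> r2 * M * M * cmod (\<mu> - \<mu>')"
    proof -
      have "norm (scaleC \<mu> (scaleC (\<mu>' - \<mu>) (R \<mu> * R \<mu>'))) = cmod \<mu> * (cmod (\<mu> - \<mu>') * norm (R \<mu> * R \<mu>'))"
        by (simp add: norm_scaleC norm_minus_commute)
      also have "\<dots> \<le> r2 * (cmod (\<mu> - \<mu>') * (M * M))"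
      proof (intro mult_mono mult_left_mono)
        show "norm (R \<mu> * R \<mu>') \<le> M * M"
          using norm_mult_ineq[of "R \<mu>" "R \<mu>'"] M[OF a] M[OF b]
          by (meson mult_mono norm_ge_zero order.trans)
      qed (use a M0 r1 in auto)
      finally show ?thesis by (simp add: algebra_simps)
    qed
    have n2: "norm (scaleC (\<mu> - \<mu>') (R \<mu>')) \<le> M * cmod (\<mu> - \<mu>')"
      using M[OF b] by (simp add: norm_scaleC mult.commute mult_right_mono)
    show "norm (fR \<mu> - fR \<mu>') \<le> (r2 * M * M + M) * cmod (\<mu> - \<mu>')"
      unfolding e using norm_triangle_ineq[of "scaleC \<mu> (scaleC (\<mu>' - \<mu>) (R \<mu> * R \<mu>'))" "scaleC (\<mu> - \<mu>') (R \<mu>')"] n1 n2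
      by (simp add: algebra_simps)
  qed
qed

lemma Phi_lip:
  assumes L: "\<forall>\<mu> \<mu>'. r1 \<le> cmod \<mu> \<and> cmod \<mu> \<le> r2 \<longrightarrow> r1 \<le> cmod \<mu>' \<and> cmod \<mu>' \<le> r2 \<longrightarrow>
            norm (fR \<mu> - fR \<mu>') \<le> L * cmod (\<mu> - \<mu>')"
    and a: "r1 \<le> cmod l \<and> cmod l \<le> r2" and b: "r1 \<le> cmod l' \<and> cmod l' \<le> r2"
  shows "norm (Phi j l - Phi j l') \<le> L * cmod (l - l')"
proof -
  have "Phi j l - Phi j l' = scaleR (1 / 2 ^ j) (\<Sum>k<2^j. fR (l * om j ^ k) - fR (l' * om j ^ k))"
    by (simp add: Phi_def sum_subtractf scaleR_diff_right)
  then have "norm (Phi j l - Phi j l') = (1 / 2 ^ j) * norm (\<Sum>k<2^j. fR (l * om j ^ k) - fR (l' * om j ^ k))"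
    by simp
  also have "\<dots> \<le> (1 / 2 ^ j) * (\<Sum>k<(2::nat)^j. L * cmod (l - l'))"
  proof (intro mult_left_mono sum_norm_le)
    fix k
    have "norm (fR (l * om j ^ k) - fR (l' * om j ^ k)) \<le> L * cmod (l * om j ^ k - l' * om j ^ k)"
      using L a b by (simp add: norm_mult)
    also have "cmod (l * om j ^ k - l' * om j ^ k) = cmod (l - l')"
      by (simp add: left_diff_distrib[symmetric] norm_mult)
    finally show "norm (fR (l * om j ^ k) - fR (l' * om j ^ k)) \<le> L * cmod (l - l')" .
  qed simp
  also have "\<dots> = L * cmod (l - l')" by simp
  finally show ?thesis .
qed


lemma Phi_rot_close:
  assumes l: "l \<noteq> 0"
  shows "\<exists>D. \<forall>j. norm (Phi j (l * om (Suc j)) - Phi j l) \<le> D * (1/2) ^ j"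
proof -
  have r: "0 < cmod l" using l by simp
  obtain L where L0: "L \<ge> 0" and L: "\<forall>\<mu> \<mu>'. cmod l \<le> cmod \<mu> \<and> cmod \<mu> \<le> cmod l \<longrightarrow> cmod l \<le> cmod \<mu>' \<and> cmod \<mu>' \<le> cmod l \<longrightarrow>
            norm (fR \<mu> - fR \<mu>') \<le> L * cmod (\<mu> - \<mu>')"
    using fR_lip[OF r order_refl] by blast
  show ?thesis
  proof (intro exI allI)
    fix j
    have cm: "cmod (l * om (Suc j)) = cmod l" using norm_om_pow[of "Suc j" 1] by (simp add: norm_mult)
    have "norm (Phi j (l * om (Suc j)) - Phi j l) \<le> L * cmod (l * om (Suc j) - l)"
      by (rule Phi_lip[OF L]) (simp_all add: cm)
    also have "cmod (l * om (Suc j) - l) = cmod l * cmod (om (Suc j) - 1)"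
      by (simp add: norm_mult[symmetric] algebra_simps)
    also have "L * (cmod l * cmod (om (Suc j) - 1)) \<le> L * (cmod l * (pi / 2 ^ j))"
      by (intro mult_left_mono om_Suc_bound L0) simp_all
    also have "\<dots> = (L * cmod l * pi) * (1/2) ^ j" by (simp add: power_one_over)
    finally show "norm (Phi j (l * om (Suc j)) - Phi j l) \<le> (L * cmod l * pi) * (1/2) ^ j" .
  qed
qed

lemma Phi_step:
  assumes l: "l \<noteq> 0"
  shows "\<exists>D. \<forall>j. norm (Phi (Suc j) l - Phi j l) \<le> D * (1/2) ^ j"
proof -
  obtain D where D: "\<And>j. norm (Phi j (l * om (Suc j)) - Phi j l) \<le> D * (1/2) ^ j"
    using Phi_rot_close[OF l] by blast
  show ?thesis
  proof (intro exI allI)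
    fix j
    have "Phi (Suc j) l - Phi j l = scaleR (1/2) (Phi j (l * om (Suc j)) - Phi j l)"
      by (simp add: Phi_Suc algebra_simps scaleR_add_right scaleR_diff_right)
         (simp add: scaleR_2[symmetric] scaleR_left_distrib[symmetric])
    then have "norm (Phi (Suc j) l - Phi j l) = (1/2) * norm (Phi j (l * om (Suc j)) - Phi j l)" by simp
    then show "norm (Phi (Suc j) l - Phi j l) \<le> D * (1/2) ^ j"
      using D[of j] norm_ge_zero[of "Phi j (l * om (Suc j)) - Phi j l"] by linarith
  qed
qed

lemma Phi_convergent:
  assumes l: "l \<noteq> 0"
  shows "convergent (\<lambda>j. Phi j l)"
proof -
  obtain D where D: "\<And>j. norm (Phi (Suc j) l - Phi j l) \<le> D * (1/2) ^ j"
    using Phi_step[OF l] by blast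
  have "summable (\<lambda>j. D * (1/2::real) ^ j)" by (simp add: summable_geometric)
  then have "summable (\<lambda>j. norm (Phi (Suc j) l - Phi j l))"
    by (rule summable_comparison_test') (use D in simp)
  then have s: "summable (\<lambda>j. Phi (Suc j) l - Phi j l)" by (rule summable_norm_cancel)
  have "(\<lambda>n. \<Sum>j<n. Phi (Suc j) l - Phi j l) \<longlonglongrightarrow> (\<Sum>j. Phi (Suc j) l - Phi j l)"
    by (rule summable_LIMSEQ[OF s])
  then have "(\<lambda>n. Phi n l - Phi 0 l) \<longlonglongrightarrow> (\<Sum>j. Phi (Suc j) l - Phi j l)"
    by (simp only: sum_lessThan_telescope[of "\<lambda>n. Phi n l"])
  then have "(\<lambda>n. (Phi n l - Phi 0 l) + Phi 0 l) \<longlonglongrightarrow> (\<Sum>j. Phi (Suc j) l - Phi j l) + Phi 0 l"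
    by (intro tendsto_add tendsto_const)
  then show ?thesis by (auto simp: convergent_def)
qed

definition c :: "complex \<Rightarrow> 'a" where "c l = lim (\<lambda>j. Phi j l)"

lemma Phi_c: "l \<noteq> 0 \<Longrightarrow> (\<lambda>j. Phi j l) \<longlonglongrightarrow> c l"
  unfolding c_def using Phi_convergent convergent_LIMSEQ_iff by blast

lemma geom_0: "(\<lambda>j. D * (1/2::real) ^ j) \<longlonglongrightarrow> 0"
  by (intro tendsto_mult_right_zero LIMSEQ_power_zero) simp

lemma c_idem:
  assumes l: "l \<noteq> 0"
  shows "c l * c l = c l"
proof -
  obtain D where D: "\<And>j. norm (Phi j (l * om (Suc j)) - Phi j l) \<le> D * (1/2) ^ j"
    using Phi_rot_close[OF l] by blast
  have "(\<lambda>j. Phi j (l * om (Suc j)) - Phi j l) \<longlonglongrightarrow> 0"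
  proof (rule tendsto_0_le[OF geom_0[of D], where K=1])
    show "\<forall>\<^sub>F j in sequentially. norm (Phi j (l * om (Suc j)) - Phi j l) \<le> norm (D * (1/2) ^ j) * 1"
      using D by (intro always_eventually allI) (simp add: order.trans[OF _ abs_ge_self])
  qed
  then have "(\<lambda>j. (Phi j (l * om (Suc j)) - Phi j l) + Phi j l) \<longlonglongrightarrow> 0 + c l"
    by (intro tendsto_add Phi_c[OF l])
  then have t: "(\<lambda>j. Phi j (l * om (Suc j))) \<longlonglongrightarrow> c l" by simp
  have "(\<lambda>j. Phi j l * Phi j (l * om (Suc j))) \<longlonglongrightarrow> c l * c l"
    by (intro tendsto_mult Phi_c[OF l] t)
  then have "(\<lambda>j. Phi (Suc j) l) \<longlonglongrightarrow> c l * c l" by (simp add: Phi_Suc_mult[OF l])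
  moreover have "(\<lambda>j. Phi (Suc j) l) \<longlonglongrightarrow> c l" using Phi_c[OF l] by (rule LIMSEQ_Suc)
  ultimately show ?thesis by (rule LIMSEQ_unique)
qed

lemma c_lip:
  assumes r1: "0 < r1" and r12: "r1 \<le> r2"
  shows "\<exists>L\<ge>0. \<forall>l l'. r1 \<le> cmod l \<and> cmod l \<le> r2 \<longrightarrow> r1 \<le> cmod l' \<and> cmod l' \<le> r2 \<longrightarrow>
            norm (c l - c l') \<le> L * cmod (l - l')"
proof -
  obtain L where L0: "L \<ge> 0" and L: "\<forall>\<mu> \<mu>'. r1 \<le> cmod \<mu> \<and> cmod \<mu> \<le> r2 \<longrightarrow> r1 \<le> cmod \<mu>' \<and> cmod \<mu>' \<le> r2 \<longrightarrow>
            norm (fR \<mu> - fR \<mu>') \<le> L * cmod (\<mu> - \<mu>')"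
    using fR_lip[OF r1 r12] by blast
  show ?thesis
  proof (intro exI[of _ L] conjI allI impI L0)
    fix l l' assume a: "r1 \<le> cmod l \<and> cmod l \<le> r2" and b: "r1 \<le> cmod l' \<and> cmod l' \<le> r2"
    have nz: "l \<noteq> 0" "l' \<noteq> 0" using a b r1 by auto
    have "(\<lambda>j. norm (Phi j l - Phi j l')) \<longlonglongrightarrow> norm (c l - c l')"
      by (intro tendsto_norm tendsto_diff Phi_c nz)
    moreover have "\<exists>N. \<forall>n\<ge>N. norm (Phi n l - Phi n l') \<le> L * cmod (l - l')"
      using Phi_lip[OF L a b] by blast
    ultimately show "norm (c l - c l') \<le> L * cmod (l - l')" by (rule LIMSEQ_le_const2)
  qed
qed

lemma c_big:
  assumes l: "l \<noteq> 0" and big: "2 * norm x \<le> cmod l"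
  shows "c l = 1"
proof -
  have bnd: "norm (Phi j l - 1) \<le> norm (2 * (1/2::real) ^ j) * 1" for j
  proof -
    let ?u = "uu j l" and ?P = "Phi j l"
    have cl: "0 < cmod l" using l by simp
    have "norm ?u = (1 / cmod l) ^ (2^j) * norm (x ^ (2^j))"
      by (simp add: uu_def norm_scaleC norm_power norm_divide)
    also have "\<dots> \<le> (1 / cmod l) ^ (2^j) * norm x ^ (2^j)"
      by (intro mult_left_mono norm_power_ineq) simp
    also have "\<dots> = (norm x / cmod l) ^ (2^j)" by (simp add: power_divide)
    also have "\<dots> \<le> (1/2) ^ (2^j)"
      by (intro power_mono) (use big cl in \<open>simp_all add: field_simps\<close>)
    finally have nu0: "norm ?u \<le> (1/2) ^ (2^j)" .
    have "(1/2::real) ^ (2^j) \<le> (1/2) ^ j"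
      by (rule power_decreasing) (simp_all add: less_imp_le less_exp)
    then have nu: "norm ?u \<le> (1/2) ^ j" using nu0 by linarith
    have "(1/2::real) ^ (2^j) \<le> (1/2) ^ 1"
      by (rule power_decreasing) simp_all
    then have nu2: "norm ?u \<le> 1/2" using nu0 by simp
    have h: "(1 - ?u) * ?P = 1" by (rule Phi_comm_inv[OF l])
    have eq: "?P = 1 + ?u * ?P" using h by (simp add: algebra_simps)
    have eq2: "?P - 1 = ?u * ?P" using h by (simp add: algebra_simps)
    have "norm ?P = norm (1 + ?u * ?P)" using arg_cong[OF eq, of norm] .
    also have "\<dots> \<le> norm (1::'a) + norm (?u * ?P)" by (rule norm_triangle_ineq)
    also have "\<dots> \<le> 1 + norm ?u * norm ?P" using norm_mult_ineq[of ?u ?P] by simp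
    finally have "norm ?P \<le> 1 + norm ?u * norm ?P" .
    also have "\<dots> \<le> 1 + (1/2) * norm ?P" using nu2 by (intro add_left_mono mult_right_mono) simp_all
    finally have nP: "norm ?P \<le> 2" by simp
    have "norm (?P - 1) = norm (?u * ?P)" using eq2 by simp
    also have "\<dots> \<le> norm ?u * norm ?P" by (rule norm_mult_ineq)
    also have "\<dots> \<le> (1/2) ^ j * 2" using nu nP by (intro mult_mono) simp_all
    finally show ?thesis by simp
  qed
  have "(\<lambda>j. Phi j l - 1) \<longlonglongrightarrow> 0"
    by (rule tendsto_0_le[OF geom_0[of 2], where K=1]) (use bnd in simp)
  then have "(\<lambda>j. Phi j l) \<longlonglongrightarrow> 1" by (simp add: LIM_zero_iff)
  then show ?thesis using Phi_c[OF l] LIMSEQ_unique by blast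
qed

lemma idem_norm_gap: "(e::'a) * e = e \<Longrightarrow> norm e = 0 \<or> norm e \<ge> 1"
proof -
  assume e: "e * e = e"
  have "norm e * 1 \<le> norm e * norm e" using norm_mult_ineq[of e e] e by simp
  then show ?thesis
    by (cases "norm e = 0") (simp_all add: mult_le_cancel_left)
qed

lemma c_one:
  assumes r: "0 < r"
  shows "c (of_real r) = 1"
proof (rule ccontr)
  assume ne: "c (of_real r) \<noteq> 1"
  define r0 where "r0 = max r (2 * norm x + 1)"
  have rr0: "r \<le> r0" and r0pos: "0 < r0" using r unfolding r0_def by auto
  obtain L where L0: "L \<ge> 0" and L: "\<forall>l l'. r \<le> cmod l \<and> cmod l \<le> r0 \<longrightarrow> r \<le> cmod l' \<and> cmod l' \<le> r0 \<longrightarrow>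
            norm (c l - c l') \<le> L * cmod (l - l')"
    using c_lip[OF r rr0] by blast
  define g where "g t = norm (1 - c (complex_of_real t))" for t
  have cont: "continuous_on {r..r0} g"
    unfolding continuous_on_iff
  proof (intro ballI allI impI)
    fix t e assume t: "t \<in> {r..r0}" and e: "(0::real) < e"
    show "\<exists>d>0. \<forall>t'\<in>{r..r0}. dist t' t < d \<longrightarrow> dist (g t') (g t) < e"
    proof (intro exI[of _ "e / (L + 1)"] conjI ballI impI)
      show "0 < e / (L + 1)" using e L0 by simp
      fix t' assume t': "t' \<in> {r..r0}" and d: "dist t' t < e / (L + 1)"
      have "dist (g t') (g t) \<le> norm ((1 - c (of_real t')) - (1 - c (of_real t)))"
        unfolding g_def dist_real_def by (rule norm_triangle_ineq3)
      also have "(1 - c (of_real t')) - (1 - c (of_real t)) = - (c (of_real t') - c (of_real t))"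
        by simp
      also have "norm (- (c (of_real t') - c (of_real t))) = norm (c (of_real t') - c (of_real t))"
        by (rule norm_minus_cancel)
      also have "\<dots> \<le> L * cmod (of_real t' - of_real t)"
        using L t t' r by auto
      also have "\<dots> = L * dist t' t" by (simp add: dist_real_def flip: of_real_diff)
      also have "\<dots> \<le> L * (e / (L + 1))" using d L0 by (intro mult_left_mono) simp_all
      also have "\<dots> < e" using e L0 by (simp add: field_simps)
      finally show "dist (g t') (g t) < e" .
    qed
  qed
  have g0: "g r0 = 0"
    unfolding g_def using c_big[of "of_real r0"] r0pos by (simp add: r0_def)
  have gap: "g t = 0 \<or> g t \<ge> 1" if "0 < t" for t
  proof -
    have "c (of_real t) * c (of_real t) = c (of_real t)" by (rule c_idem) (use that in simp)
    then have "(1 - c (of_real t)) * (1 - c (of_real t)) = 1 - c (of_real t)"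
      by (simp add: algebra_simps)
    then show ?thesis unfolding g_def by (rule idem_norm_gap)
  qed
  have "g r \<noteq> 0" using ne unfolding g_def by simp
  then have g1: "g r \<ge> 1" using gap[OF r] by simp
  obtain t where "r \<le> t" "t \<le> r0" "g t = 1/2"
    using IVT2'[of g r0 "1/2" r, OF _ _ rr0 cont] g0 g1 by auto
  then show False using gap[of t] r by auto
qed

lemma pow_bound:
  assumes r: "0 < r"
  shows "\<exists>N>0. norm (x ^ N) \<le> r ^ N"
proof -
  have l: "complex_of_real r \<noteq> 0" using r by simp
  have "(\<lambda>j. Phi j (of_real r)) \<longlonglongrightarrow> 1" using Phi_c[OF l] c_one[OF r] by simp
  then have "eventually (\<lambda>j. dist (Phi j (of_real r)) 1 < 1/2) sequentially"
    by (rule tendstoD) simp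
  then obtain j where j: "dist (Phi j (of_real r)) 1 < 1/2" by (auto simp: eventually_sequentially)
  let ?u = "uu j (of_real r)" and ?P = "Phi j (of_real r)"
  have h: "?P * (1 - ?u) = 1" by (rule Phi_inv[OF l])
  have eq: "?u = (?P - 1) * (1 - ?u)" using h by (simp add: algebra_simps)
  have "norm ?u \<le> norm (?P - 1) * norm (1 - ?u)" by (subst eq) (rule norm_mult_ineq)
  also have "\<dots> \<le> (1/2) * (1 + norm ?u)"
    using j norm_triangle_ineq4[of 1 ?u]
    by (intro mult_mono) (simp_all add: dist_norm)
  finally have nu: "norm ?u \<le> 1" by simp
  have "norm ?u = (1 / r) ^ (2^j) * norm (x ^ (2^j))"
    using r by (simp add: uu_def norm_scaleC norm_power norm_divide)
  then have e: "norm (x ^ (2^j)) = norm ?u * r ^ (2^j)" using r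
    by (simp add: power_one_over field_simps)
  have "norm ?u * r ^ (2^j) \<le> 1 * r ^ (2^j)" using nu r by (intro mult_right_mono) simp_all
  then have "norm (x ^ (2^j)) \<le> r ^ (2^j)" using e by simp
  then show ?thesis by (intro exI[of _ "2^j"]) simp
qed

end

lemma invertible_small:
  fixes x :: "'a::complex_banach_algebra_1"
  assumes inv: "\<And>\<mu>. \<mu> \<noteq> 0 \<Longrightarrow> invertible_elem (scaleC \<mu> 1 - x)"
  shows "small x"
  unfolding small_def
proof (intro allI impI)
  interpret qn x by (rule qn.intro) (rule inv)
  fix \<rho> :: real assume r: "\<rho> > 0"
  obtain N where N: "N > 0" "norm (x ^ N) \<le> \<rho> ^ N" using pow_bound[OF r] by blast
  define B where "B = (\<Sum>i<N. (norm x / \<rho>) ^ i)"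
  show "\<exists>C. \<forall>m. norm (x ^ m) \<le> C * \<rho> ^ m"
  proof (intro exI allI)
    fix m
    define q where "q = m div N"
    define r0 where "r0 = m mod N"
    have m: "m = N * q + r0" unfolding q_def r0_def by simp
    have r0n: "r0 < N" unfolding r0_def using N by simp
    have "(norm x / \<rho>) ^ r0 \<le> B"
      unfolding B_def by (rule member_le_sum) (use r0n r in auto)
    then have xr: "norm x ^ r0 \<le> B * \<rho> ^ r0" using r by (simp add: power_divide field_simps)
    have "norm (x ^ m) = norm ((x ^ N) ^ q * x ^ r0)" by (simp add: m power_add power_mult)
    also have "\<dots> \<le> norm ((x ^ N) ^ q) * norm (x ^ r0)" by (rule norm_mult_ineq)
    also have "\<dots> \<le> (\<rho> ^ N) ^ q * (B * \<rho> ^ r0)"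
    proof (rule mult_mono)
      show "norm ((x ^ N) ^ q) \<le> (\<rho> ^ N) ^ q"
        using norm_power_ineq[of "x ^ N" q] power_mono[OF N(2), of q] by simp
      show "norm (x ^ r0) \<le> B * \<rho> ^ r0"
        using norm_power_ineq[of x r0] xr by linarith
    qed (use r in auto)
    also have "\<dots> = B * \<rho> ^ m" by (simp add: m power_add power_mult)
    finally show "norm (x ^ m) \<le> B * \<rho> ^ m" .
  qed
qed

definition bic :: "'a::ring_1 \<Rightarrow> 'a \<Rightarrow> bool" where
  "bic a u \<longleftrightarrow> (\<forall>v. comm_el v a \<longrightarrow> comm_el v u)"

lemma bic_self: "bic a a" by (simp add: bic_def)
lemma bic_one: "bic a 1" by (simp add: bic_def)
lemma bic_zero: "bic a 0" by (simp add: bic_def)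
lemma bic_add: "bic a u \<Longrightarrow> bic a w \<Longrightarrow> bic a (u + w)" by (simp add: bic_def comm_el_add)
lemma bic_diff: "bic a u \<Longrightarrow> bic a w \<Longrightarrow> bic a (u - w)" by (simp add: bic_def comm_el_diff)
lemma bic_minus: "bic a u \<Longrightarrow> bic a (- u)" by (simp add: bic_def comm_el_minus)
lemma bic_mult: "bic a u \<Longrightarrow> bic a w \<Longrightarrow> bic a (u * w)" by (simp add: bic_def comm_el_mult)
lemma bic_power: "bic a u \<Longrightarrow> bic a (u ^ n)" by (simp add: bic_def comm_el_power)
lemma bic_inv: "bic a u \<Longrightarrow> invertible_elem u \<Longrightarrow> bic a (inv_el u)"
  by (simp add: bic_def comm_el_inv_el)
lemma bic_comm: "bic a u \<Longrightarrow> bic a w \<Longrightarrow> comm_el u w"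
  unfolding bic_def by (meson comm_el_refl comm_el_sym)
lemma bic_comm_a: "bic a u \<Longrightarrow> comm_el a u"
  unfolding bic_def by simp

lemma bic_scaleR: "bic a u \<Longrightarrow> bic a (scaleR r (u::'a::real_normed_algebra_1))"
  unfolding bic_def comm_el_def by (simp add: mult_scaleR_right mult_scaleR_left)

lemma bic_scaleC: "bic a u \<Longrightarrow> bic a (scaleC z (u::'a::complex_banach_algebra_1))"
  unfolding bic_def comm_el_def by (simp add: mult_scaleC_right mult_scaleC_left)

lemma comm_el_suminf:
  fixes f :: "nat \<Rightarrow> 'a::{real_normed_algebra_1,banach}"
  assumes s: "summable f" and c: "\<And>m. comm_el v (f m)"
  shows "comm_el v (suminf f)"
proof -
  have "v * suminf f = (\<Sum>m. v * f m)" by (rule suminf_mult[OF s, symmetric])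
  also have "\<dots> = (\<Sum>m. f m * v)" using c by (simp add: comm_el_def)
  also have "\<dots> = suminf f * v" by (rule suminf_mult2[OF s, symmetric])
  finally show ?thesis by (simp add: comm_el_def)
qed

lemma bic_suminf:
  fixes f :: "nat \<Rightarrow> 'a::{real_normed_algebra_1,banach}"
  shows "summable f \<Longrightarrow> (\<And>m. bic a (f m)) \<Longrightarrow> bic a (suminf f)"
  unfolding bic_def using comm_el_suminf by blast

lemmas bic_intros = bic_self bic_one bic_zero bic_add bic_diff bic_minus bic_mult bic_power
  bic_scaleR bic_scaleC

fun geo :: "complex \<Rightarrow> 'a::complex_banach_algebra_1 \<Rightarrow> nat \<Rightarrow> 'a" where
  "geo l a 0 = 1"
| "geo l a (Suc n) = scaleC l (geo l a n) + a ^ Suc n"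

lemma bic_geo: "bic a (geo l a n)"
  by (induction n) (simp_all add: bic_intros)

lemma geo_prop: "(scaleC l 1 - a) * geo l a n = scaleC (l ^ Suc n) 1 - a ^ Suc n"
proof (induction n)
  case 0 then show ?case by (simp add: scaleC_one)
next
  case (Suc n)
  have "(scaleC l 1 - a) * geo l a (Suc n)
      = scaleC l ((scaleC l 1 - a) * geo l a n) + (scaleC l 1 - a) * a ^ Suc n"
    by (simp add: distrib_left mult_scaleC_right)
  also have "\<dots> = scaleC l (scaleC (l ^ Suc n) 1 - a ^ Suc n) + (scaleC l (a ^ Suc n) - a ^ Suc (Suc n))"
    using Suc by (simp add: left_diff_distrib scaleC_1_mult)
  also have "\<dots> = scaleC (l ^ Suc (Suc n)) 1 - a ^ Suc (Suc n)"
    by (simp add: scaleC_diff_right scaleC_scaleC)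
  finally show ?case .
qed

lemma comm_scal_diff: "comm_el u v \<Longrightarrow> comm_el (scaleC c 1 - u) (v::'a::complex_banach_algebra_1)"
  by (simp add: comm_el_def algebra_simps scaleC_1_mult mult_scaleC_1)

section \<open>From g-pi-Hirano invertibility to a spectral condition\<close>

lemma GH:
  fixes a :: "'a::complex_banach_algebra_1"
  assumes "gpi_Hirano_invertible a"
  shows "\<exists>n>0. spectrum a \<subseteq> {0} \<union> {z. z ^ n = 1}"
proof -
  obtain x n where xax: "x * a * x = x" and ax: "a * x = x * a" and n: "n > 0"
    and qn: "quasinilpotent (a - a ^ (n + 2) * x)"
    using assms unfolding gpi_Hirano_invertible_def by blast
  define y where "y = a - a ^ (n + 2) * x"
  define p where "p = a * x"
  define P where "P = 1 - p"
  have cax: "comm_el a x" using ax by (simp add: comm_el_def)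
  have pp: "p * p = p" unfolding p_def using xax by (simp add: mult.assoc)
  have cap: "comm_el a p" unfolding p_def by (simp add: comm_el_mult cax)
  have cay: "comm_el a y" unfolding y_def by (intro comm_el_diff comm_el_mult comm_el_power cax) simp_all
  have cxp: "comm_el x p" unfolding p_def using cax by (simp add: comm_el_def mult.assoc)
  have cyp: "comm_el y p" unfolding y_def
    by (intro comm_el_sym[OF comm_el_diff] comm_el_mult comm_el_power cap cxp comm_el_sym[OF cap] comm_el_sym[OF cxp])
  have xP: "x * P = 0" unfolding P_def p_def using xax by (simp add: right_diff_distrib mult.assoc)
  have yP: "y * P = a * P" unfolding y_def by (simp add: left_diff_distrib mult.assoc xP)
  have yp: "y * p = (a - a ^ (n + 1)) * p"
  proof -
    have pw: "a ^ (n + 2) = a ^ (n + 1) * a" using power_Suc2[of a "n+1"] by simp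
    have "a ^ (n + 2) * x * p = a ^ (n + 1) * p * p" unfolding pw by (simp add: p_def mult.assoc)
    then show ?thesis unfolding y_def by (simp add: left_diff_distrib pp mult.assoc)
  qed
  show ?thesis
  proof (intro exI[of _ n] conjI n subsetI)
    fix l assume l: "l \<in> spectrum a"
    show "l \<in> {0} \<union> {z. z ^ n = 1}"
    proof (rule ccontr)
      assume "l \<notin> {0} \<union> {z. z ^ n = 1}"
      then have l0: "l \<noteq> 0" and ln: "l ^ n \<noteq> 1" by auto
      define f where "f = l - l ^ (n + 1)"
      have f0: "f \<noteq> 0" unfolding f_def using l0 ln by (simp add: right_diff_distrib[symmetric])
      define V where "V = inv_el (scaleC l 1 - y)"
      define W where "W = inv_el (scaleC f 1 - y)"
      have iV: "invertible_elem (scaleC l 1 - y)" using qnil_invertible[OF qn[folded y_def] l0] .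
      have iW: "invertible_elem (scaleC f 1 - y)" using qnil_invertible[OF qn[folded y_def] f0] .
      define h where "h = 1 - geo l a n"
      define Z where "Z = V * P + h * W * p"
      have cyS: "comm_el y (scaleC c 1)" for c by (simp add: comm_el_def scaleC_1_mult mult_scaleC_1)
      have cVP: "comm_el V P" unfolding V_def P_def
        by (intro comm_el_sym[OF comm_el_inv_el] iV comm_el_diff comm_el_sym[OF cyp]) (simp_all add: comm_el_def scaleC_1_mult mult_scaleC_1)
      have cWp: "comm_el W p" unfolding W_def
        by (intro comm_el_sym[OF comm_el_inv_el] iW comm_el_diff comm_el_sym[OF cyp]) (simp_all add: comm_el_def scaleC_1_mult mult_scaleC_1)
      have e1: "(scaleC l 1 - a) * (V * P) = P"
      proof -
        have "(scaleC l 1 - a) * (V * P) = (scaleC l 1 - a) * (P * V)" using cVP by (simp add: comm_el_def)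
        also have "\<dots> = ((scaleC l 1 - a) * P) * V" by (simp add: mult.assoc)
        also have "(scaleC l 1 - a) * P = (scaleC l 1 - y) * P"
          by (simp add: left_diff_distrib yP)
        also have "(scaleC l 1 - y) * P = P * (scaleC l 1 - y)"
          using comm_scal_diff[OF comm_el_diff[OF comm_el_one(2) cyp], of l] by (simp add: comm_el_def P_def)
        also have "P * (scaleC l 1 - y) * V = P" using inv_el_right[OF iV] by (simp add: V_def mult.assoc)
        finally show ?thesis .
      qed
      have e2: "(scaleC l 1 - a) * (h * W * p) = p"
      proof -
        have "(scaleC l 1 - a) * h = (scaleC l 1 - a) - (scaleC (l ^ Suc n) 1 - a ^ Suc n)"
          unfolding h_def by (simp add: right_diff_distrib geo_prop)
        also have "\<dots> = scaleC f 1 - (a - a ^ (n + 1))"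
          by (simp add: f_def scaleC_diff_left)
        finally have hh: "(scaleC l 1 - a) * h = scaleC f 1 - (a - a ^ (n + 1))" .
        have "(scaleC l 1 - a) * (h * W * p) = (scaleC f 1 - (a - a ^ (n + 1))) * (W * p)"
          by (simp add: mult.assoc[symmetric] hh)
        also have "\<dots> = (scaleC f 1 - (a - a ^ (n + 1))) * (p * W)" using cWp by (simp add: comm_el_def)
        also have "\<dots> = (scaleC f 1 - (a - a ^ (n + 1))) * p * W" by (simp add: mult.assoc)
        also have "(scaleC f 1 - (a - a ^ (n + 1))) * p = (scaleC f 1 - y) * p"
          by (simp add: left_diff_distrib yp)
        also have "(scaleC f 1 - y) * p = p * (scaleC f 1 - y)"
          using comm_scal_diff[OF cyp, of f] by (simp add: comm_el_def)
        also have "p * (scaleC f 1 - y) * W = p" using inv_el_right[OF iW] by (simp add: W_def mult.assoc)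
        finally show ?thesis .
      qed
      have rinv: "(scaleC l 1 - a) * Z = 1"
        unfolding Z_def distrib_left e1 e2 by (simp add: P_def)
      have caV: "comm_el a V" unfolding V_def
        by (intro comm_el_inv_el iV comm_el_diff cay) (simp add: comm_el_def scaleC_1_mult mult_scaleC_1)
      have caW: "comm_el a W" unfolding W_def
        by (intro comm_el_inv_el iW comm_el_diff cay) (simp add: comm_el_def scaleC_1_mult mult_scaleC_1)
      have cah: "comm_el a h" unfolding h_def using bic_comm_a[OF bic_geo]
        by (intro comm_el_diff) simp_all
      have caP: "comm_el a P" unfolding P_def by (intro comm_el_diff cap) simp
      have caZ: "comm_el a Z" unfolding Z_def
        by (intro comm_el_add comm_el_mult caV caP cah caW cap)
      have "comm_el (scaleC l 1 - a) Z"
        using caZ by (simp add: comm_el_def algebra_simps scaleC_1_mult mult_scaleC_1)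
      then have "invertible_elem (scaleC l 1 - a)" by (rule invertible_comm_right[OF rinv])
      then show False using l by (simp add: spectrum_def)
    qed
  qed
qed

definition pev :: "complex poly \<Rightarrow> 'a::complex_banach_algebra_1 \<Rightarrow> 'a" where
  "pev p a = (\<Sum>i\<le>degree p. scaleC (coeff p i) (a ^ i))"

lemma pev_eq: "degree p \<le> N \<Longrightarrow> pev p a = (\<Sum>i\<le>N. scaleC (coeff p i) (a ^ i))"
  unfolding pev_def by (rule sum.mono_neutral_left) (auto simp: coeff_eq_0)

lemma pev_linear: "pev ([:-\<mu>, 1:] * r) a = (a - scaleC \<mu> 1) * pev r a"
proof -
  let ?N = "Suc (degree r)"
  have d: "degree ([:-\<mu>, 1:] * r) \<le> ?N"
    using degree_mult_le[of "[:-\<mu>, 1:]" r] by simp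
  have c: "coeff ([:-\<mu>, 1:] * r) i = coeff (pCons 0 r) i - \<mu> * coeff r i" for i
    by simp
  have "pev ([:-\<mu>, 1:] * r) a = (\<Sum>i\<le>?N. scaleC (coeff (pCons 0 r) i) (a ^ i) - scaleC \<mu> (scaleC (coeff r i) (a ^ i)))"
    unfolding pev_eq[OF d] c by (simp add: scaleC_diff_left scaleC_scaleC)
  also have "\<dots> = (\<Sum>i\<le>?N. scaleC (coeff (pCons 0 r) i) (a ^ i)) - scaleC \<mu> (\<Sum>i\<le>?N. scaleC (coeff r i) (a ^ i))"
    by (simp only: sum_subtractf scaleC_sum_right)
  also have "(\<Sum>i\<le>?N. scaleC (coeff (pCons 0 r) i) (a ^ i)) = (\<Sum>i\<le>degree r. scaleC (coeff r i) (a ^ Suc i))"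
    by (subst sum.atMost_Suc_shift) simp
  also have "\<dots> = a * pev r a"
    by (simp add: pev_def sum_distrib_left mult_scaleC_right)
  also have "(\<Sum>i\<le>?N. scaleC (coeff r i) (a ^ i)) = pev r a"
    by (rule pev_eq[symmetric]) simp
  finally show ?thesis by (simp add: left_diff_distrib scaleC_1_mult)
qed

lemma pev_invertible:
  fixes a :: "'a::complex_banach_algebra_1"
  shows "p \<noteq> 0 \<Longrightarrow> (\<forall>\<mu>. poly p \<mu> = 0 \<longrightarrow> \<mu> \<notin> spectrum a) \<Longrightarrow> invertible_elem (pev p a)"
proof (induction "degree p" arbitrary: p)
  case 0
  have "pev p a = scaleC (coeff p 0) 1" unfolding pev_def using 0(1)[symmetric] by simp
  moreover have "coeff p 0 \<noteq> 0" using leading_coeff_neq_0[OF 0(2)] 0(1)[symmetric] by simp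
  ultimately show ?case using invertible_scaleC[of "coeff p 0" 1] by simp
next
  case (Suc d)
  have "\<not> constant (poly p)" using constant_degree[of p] Suc(2) by simp
  then obtain \<mu> where \<mu>: "poly p \<mu> = 0" using fundamental_theorem_of_algebra by blast
  then have "[:-\<mu>, 1:] dvd p" using poly_eq_0_iff_dvd by blast
  then obtain r where r: "p = [:-\<mu>, 1:] * r" by (rule dvdE)
  have r0: "r \<noteq> 0" using Suc(3) r by auto
  have "degree p = degree [:-\<mu>, 1:] + degree r" unfolding r by (rule degree_mult_eq) (simp_all add: r0)
  then have dr: "d = degree r" using Suc(2) by simp
  have rr: "\<forall>\<nu>. poly r \<nu> = 0 \<longrightarrow> \<nu> \<notin> spectrum a" using Suc(4) r by auto
  have ir: "invertible_elem (pev r a)" by (rule Suc(1)[OF dr r0 rr])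
  have "\<mu> \<notin> spectrum a" using Suc(4) \<mu> by auto
  then have i1: "invertible_elem (scaleC \<mu> 1 - a)" by (simp add: spectrum_def)
  then have i2: "invertible_elem (a - scaleC \<mu> 1)"
    using invertibleI[of "a - scaleC \<mu> 1" "- inv_el (scaleC \<mu> 1 - a)"] inv_el_right[OF i1] inv_el_left[OF i1]
    by (simp add: algebra_simps)
  show ?case unfolding r pev_linear by (rule invertible_mult[OF i2 ir])
qed

lemma spec_q:
  fixes a :: "'a::complex_banach_algebra_1"
  assumes n: "n > 0" and sp: "spectrum a \<subseteq> {0} \<union> {z. z ^ n = 1}" and l: "l \<noteq> 0"
  shows "invertible_elem (scaleC l 1 - (a - a ^ (n + 1)))"
proof -
  define p where "p = monom (1::complex) (n + 1) + [:l, -1:]"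
  have cp: "coeff p i = (if i = n + 1 then 1 else 0) + (if i = 0 then l else if i = 1 then -1 else 0)" for i
    unfolding p_def by (simp add: coeff_monom coeff_pCons split: nat.split)
  have dp: "degree p \<le> n + 1" unfolding p_def
    by (rule degree_add_le) (auto simp: degree_monom_le intro: order.trans[OF degree_monom_le])
  have "pev p a = (\<Sum>i\<le>n+1. scaleC (if i = n + 1 then 1 else 0) (a ^ i)
                   + scaleC (if i = 0 then l else if i = 1 then -1 else 0) (a ^ i))"
    unfolding pev_eq[OF dp] cp by (simp add: scaleC_add_left)
  also have "\<dots> = (\<Sum>i\<le>n+1. scaleC (if i = n + 1 then 1 else 0) (a ^ i))
                 + (\<Sum>i\<le>n+1. scaleC (if i = 0 then l else if i = 1 then -1 else 0) (a ^ i))"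
    by (rule sum.distrib)
  also have "(\<Sum>i\<le>n+1. scaleC (if i = n + 1 then 1 else 0) (a ^ i)) = a ^ (n + 1)"
    by (simp add: if_distrib[of "\<lambda>c. scaleC c _"] scaleC_one sum.delta cong: if_cong)
  also have "(\<Sum>i\<le>n+1. scaleC (if i = 0 then l else if i = 1 then -1 else 0) (a ^ i)) = scaleC l 1 - a"
  proof -
    have "(\<Sum>i\<le>n+1. scaleC (if i = 0 then l else if i = 1 then -1 else 0) (a ^ i))
        = (\<Sum>i\<in>{0, 1}. scaleC (if i = 0 then l else if i = 1 then -1 else 0) (a ^ i))"
      by (rule sum.mono_neutral_right) (use n in auto)
    also have "\<dots> = scaleC l 1 - a" by (simp add: scaleC_minus_left scaleC_one)
    finally show ?thesis .
  qed
  finally have pe: "pev p a = scaleC l 1 - (a - a ^ (n + 1))" by (simp add: algebra_simps)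
  have p0: "p \<noteq> 0"
  proof
    assume "p = 0"
    then have "coeff p (n+1) = 0" by simp
    then show False using n by (simp add: cp)
  qed
  have roots: "\<forall>\<mu>. poly p \<mu> = 0 \<longrightarrow> \<mu> \<notin> spectrum a"
  proof (intro allI impI)
    fix \<mu> assume "poly p \<mu> = 0"
    moreover have "poly p \<mu> = \<mu> ^ (n + 1) + l - \<mu>" unfolding p_def by (simp add: poly_monom algebra_simps)
    ultimately have e: "\<mu> ^ (n + 1) + l - \<mu> = 0" by simp
    have m0: "\<mu> \<noteq> 0" using e l by auto
    have m1: "\<mu> ^ n \<noteq> 1"
    proof
      assume "\<mu> ^ n = 1"
      then have pw: "\<mu> ^ (n + 1) = \<mu>" by simp
      have "l = 0" using e by (simp only: pw add_diff_cancel_left')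
      then show False using l by simp
    qed
    show "\<mu> \<notin> spectrum a"
    proof
      assume "\<mu> \<in> spectrum a"
      then have "\<mu> \<in> {0} \<union> {z. z ^ n = 1}" using sp by blast
      then show False using m0 m1 by blast
    qed
  qed
  show ?thesis using pev_invertible[OF p0 roots] pe by simp
qed

lemma gb_half_bound: "\<bar>(1/2::real) gchoose m\<bar> \<le> 1"
proof (induction m)
  case 0 then show ?case by simp
next
  case (Suc m)
  have e: "of_nat (Suc m) * ((1/2::real) gchoose Suc m) = (1/2 - of_nat m) * ((1/2) gchoose m)"
    using gbinomial_mult_1[of "1/2::real" m] by (simp add: algebra_simps)
  have "real (Suc m) * \<bar>(1/2::real) gchoose Suc m\<bar> = \<bar>1/2 - real m\<bar> * \<bar>(1/2) gchoose m\<bar>"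
    using arg_cong[OF e, of abs] by (simp add: abs_mult)
  also have "\<dots> \<le> real (Suc m) * 1"
    by (rule mult_mono) (use Suc.IH in auto)
  finally show ?case by (simp only: mult_le_cancel_left)
qed

definition gco :: "nat \<Rightarrow> real" where "gco m = ((1/2::real) gchoose m) * (-4) ^ m"

lemma gco_bound: "\<bar>gco m\<bar> \<le> 4 ^ m"
  unfolding gco_def abs_mult using gb_half_bound[of m]
  by (simp add: power_abs)

lemma gco_conv: "(\<Sum>i\<le>k. gco i * gco (k - i)) = (-4) ^ k * real (1 choose k)"
proof -
  have "(\<Sum>i\<le>k. gco i * gco (k - i)) = (\<Sum>i\<le>k. (-4) ^ k * (((1/2::real) gchoose i) * ((1/2) gchoose (k - i))))"
    by (intro sum.cong refl) (simp add: gco_def power_add[symmetric] algebra_simps)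
  also have "\<dots> = (-4) ^ k * (\<Sum>i=0..k. ((1/2::real) gchoose i) * ((1/2) gchoose (k - i)))"
    by (simp add: sum_distrib_left atLeast0AtMost)
  also have "(\<Sum>i=0..k. ((1/2::real) gchoose i) * ((1/2) gchoose (k - i))) = (1/2 + 1/2) gchoose k"
    by (rule gbinomial_Vandermonde)
  also have "(1/2 + 1/2 :: real) gchoose k = real (1 choose k)"
    using binomial_gbinomial[of 1 k, where 'a=real] by simp
  finally show ?thesis .
qed

lemma HG:
  fixes a :: "'a::complex_banach_algebra_1"
  assumes n: "n > 0" and sp: "spectrum a \<subseteq> {0} \<union> {z. z ^ n = 1}"
  shows "gpi_Hirano_invertible a"
proof -
  define q where "q = a - a ^ (n + 1)"
  have sq: "small q" unfolding q_def
    by (rule invertible_small) (rule spec_q[OF n sp])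
  have bq: "bic a q" unfolding q_def by (intro bic_intros)
  define e where "e = a ^ n"
  have be: "bic a e" unfolding e_def by (intro bic_intros)
  define d where "d = e - e * e"
  have bd: "bic a d" unfolding d_def by (intro bic_intros be)
  have dq: "d = a ^ (n - 1) * q"
  proof -
    have "a ^ (n - 1) * a = a ^ n" using n by (metis Suc_diff_1 power_Suc2)
    then have "a ^ (n - 1) * (a - a ^ (n + 1)) = a ^ n - a ^ n * a ^ n"
      by (simp add: right_diff_distrib mult.assoc[symmetric] power_add)
    then show ?thesis unfolding d_def e_def q_def by simp
  qed
  have sd: "small d" unfolding dq
    by (rule small_mult_comm'[OF sq]) (rule bic_comm[OF bq], intro bic_intros)
  obtain Cd where Cd: "\<And>m. norm (d ^ m) \<le> Cd * (1/8) ^ m"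
    using smallD[OF sd, of "1/8"] by auto
  define T where "T m = scaleR (gco m) (d ^ m)" for m
  define T2 where "T2 m = scaleR (gco (Suc m)) (d ^ m)" for m
  have nT: "norm (T m) \<le> Cd * (1/2) ^ m" for m
  proof -
    have "norm (T m) = \<bar>gco m\<bar> * norm (d ^ m)" by (simp add: T_def)
    also have "\<dots> \<le> 4 ^ m * (Cd * (1/8) ^ m)"
      by (intro mult_mono gco_bound Cd) simp_all
    also have "\<dots> = Cd * ((4::real) ^ m * (1/8) ^ m)" by simp
    also have "(4::real) ^ m * (1/8) ^ m = (1/2) ^ m" unfolding power_mult_distrib[symmetric] by simp
    finally show ?thesis .
  qed
  have nT2: "norm (T2 m) \<le> (4 * Cd) * (1/2) ^ m" for m
  proof -
    have "norm (T2 m) = \<bar>gco (Suc m)\<bar> * norm (d ^ m)" by (simp add: T2_def)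
    also have "\<dots> \<le> 4 ^ Suc m * (Cd * (1/8) ^ m)"
      by (intro mult_mono gco_bound Cd) simp_all
    also have "\<dots> = 4 * Cd * ((4::real) ^ m * (1/8) ^ m)" by simp
    also have "(4::real) ^ m * (1/8) ^ m = (1/2) ^ m" unfolding power_mult_distrib[symmetric] by simp
    finally show ?thesis .
  qed
  have sT: "summable (\<lambda>m. norm (T m))"
    by (rule summable_comparison_test'[of "\<lambda>m. Cd * (1/2) ^ m"]) (simp_all add: summable_geometric nT)
  have sT2: "summable (\<lambda>m. norm (T2 m))"
    by (rule summable_comparison_test'[of "\<lambda>m. (4 * Cd) * (1/2) ^ m"]) (simp_all add: summable_geometric nT2)
  define r where "r = suminf T"
  define t where "t = suminf T2"
  have br: "bic a r" unfolding r_def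
    by (rule bic_suminf[OF summable_norm_cancel[OF sT]]) (simp add: T_def bic_intros bd)
  have bt: "bic a t" unfolding t_def
    by (rule bic_suminf[OF summable_norm_cancel[OF sT2]]) (simp add: T2_def bic_intros bd)
  have rr: "r * r = 1 - scaleR 4 d"
  proof -
    have cs: "(\<lambda>k. \<Sum>i\<le>k. T i * T (k - i)) sums (r * r)"
      unfolding r_def by (rule Cauchy_product_sums[OF sT sT])
    have tk: "(\<Sum>i\<le>k. T i * T (k - i)) = scaleR ((-4) ^ k * real (1 choose k)) (d ^ k)" for k
    proof -
      have "(\<Sum>i\<le>k. T i * T (k - i)) = (\<Sum>i\<le>k. scaleR (gco i * gco (k - i)) (d ^ k))"
      proof (intro sum.cong refl)
        fix i assume "i \<in> {..k}"
        then have "d ^ i * d ^ (k - i) = d ^ k" by (simp add: power_add[symmetric])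
        then show "T i * T (k - i) = scaleR (gco i * gco (k - i)) (d ^ k)"
          by (simp add: T_def)
      qed
      also have "\<dots> = scaleR (\<Sum>i\<le>k. gco i * gco (k - i)) (d ^ k)" by (simp add: scaleR_sum_left)
      finally show ?thesis by (simp add: gco_conv)
    qed
    have "(\<lambda>k. scaleR ((-4) ^ k * real (1 choose k)) (d ^ k)) sums
            (\<Sum>k\<in>{0,1}. scaleR ((-4) ^ k * real (1 choose k)) (d ^ k))"
      by (rule sums_finite) (auto simp: binomial_eq_0)
    then have "(\<lambda>k. \<Sum>i\<le>k. T i * T (k - i)) sums (1 - scaleR 4 d)"
      by (simp add: tk)
    then show ?thesis using cs sums_unique2 by blast
  qed
  have rt: "r = 1 + d * t"
  proof -
    have s: "summable T" by (rule summable_norm_cancel[OF sT])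
    have s2: "summable T2" by (rule summable_norm_cancel[OF sT2])
    have "(\<Sum>m. T (Suc m)) = r - T 0" unfolding r_def by (rule suminf_split_head[OF s])
    moreover have "(\<Sum>m. T (Suc m)) = d * t"
    proof -
      have "(\<Sum>m. T (Suc m)) = (\<Sum>m. d * T2 m)"
        by (simp add: T_def T2_def mult_scaleR_right)
      also have "\<dots> = d * t" unfolding t_def by (rule suminf_mult[OF s2])
      finally show ?thesis .
    qed
    moreover have "T 0 = 1" by (simp add: T_def gco_def)
    ultimately show ?thesis by (simp add: algebra_simps)
  qed
  define b2 where "b2 = scaleR 2 e - 1"
  define d4 where "d4 = scaleR 4 d"
  have bb2: "bic a b2" unfolding b2_def by (intro bic_intros be)
  have bd4: "bic a d4" unfolding d4_def by (intro bic_intros bd)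
  have b2b2: "b2 * b2 = 1 - d4"
  proof -
    have "b2 * b2 = scaleR 4 (e * e) - (scaleR 2 e + scaleR 2 e) + 1"
      unfolding b2_def by (simp add: algebra_simps)
    also have "scaleR 2 e + scaleR 2 e = scaleR 4 e" by (simp flip: scaleR_add_left)
    finally show ?thesis unfolding d4_def d_def by (simp add: scaleR_diff_right)
  qed
  have sd4: "small d4" unfolding d4_def by (rule small_scaleR[OF sd])
  have iJ: "invertible_elem (1 - d4)" by (rule small_invertible[OF sd4])
  define J where "J = inv_el (1 - d4)"
  have J1: "(1 - d4) * J = 1" "J * (1 - d4) = 1"
    unfolding J_def using inv_el_right[OF iJ] inv_el_left[OF iJ] by auto
  have bJ: "bic a J" unfolding J_def by (intro bic_inv iJ bic_intros bd4)
  define B where "B = b2 * J"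
  have bB: "bic a B" unfolding B_def by (intro bic_intros bb2 bJ)
  have b2B: "b2 * B = 1" unfolding B_def by (simp add: mult.assoc[symmetric] b2b2 J1)
  define w where "w = r * B"
  have bw: "bic a w" unfolding w_def by (intro bic_intros br bB)
  have ww: "w * w = 1"
  proof -
    have cBr: "B * r = r * B" using bic_comm[OF bB br] by (simp add: comm_el_def)
    have cJb: "J * b2 = b2 * J" using bic_comm[OF bJ bb2] by (simp add: comm_el_def)
    have BB: "B * B = (1 - d4) * (J * J)"
    proof -
      have "B * B = b2 * (J * b2) * J" by (simp add: B_def mult.assoc)
      also have "\<dots> = (b2 * b2) * (J * J)" by (simp add: cJb mult.assoc)
      finally show ?thesis by (simp add: b2b2)
    qed
    have "w * w = r * (B * r) * B" by (simp add: w_def mult.assoc)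
    also have "\<dots> = (r * r) * (B * B)" by (simp add: cBr mult.assoc)
    also have "\<dots> = (1 - d4) * (((1 - d4) * J) * J)" by (simp add: rr[folded d4_def] BB mult.assoc)
    also have "\<dots> = 1" by (simp add: J1)
    finally show ?thesis .
  qed
  define p where "p = scaleR (1/2) (1 + w)"
  have bp: "bic a p" unfolding p_def by (intro bic_intros bw)
  have pp: "p * p = p"
  proof -
    have "(1 + w) * (1 + w) = scaleR 2 (1 + w)"
      by (simp add: algebra_simps ww scaleR_2)
    then show ?thesis unfolding p_def by simp
  qed
  define K where "K = scaleR (-1/2) ((scaleR 4 1 + t) * B)"
  have bK: "bic a K" unfolding K_def by (intro bic_intros bt bB)
  have epK: "e - p = d * K"
  proof -
    have "e - p = scaleR (1/2) (b2 - w)"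
      unfolding p_def b2_def by (simp add: algebra_simps scaleR_2 flip: scaleR_add_left)
    also have "b2 - w = (b2 * b2 - r) * B"
      unfolding w_def by (simp add: left_diff_distrib mult.assoc b2B)
    also have "b2 * b2 - r = - (d * (scaleR 4 1 + t))"
      unfolding b2b2 rt d4_def by (simp add: algebra_simps)
    finally show ?thesis unfolding K_def by (simp add: mult.assoc)
  qed
  have sep: "small (e - p)" unfolding epK
    by (rule small_mult_comm[OF sd bic_comm[OF bd bK]])
  have sepp: "small (- ((e - p) * p))"
    by (intro small_minus small_mult_comm[OF sep] bic_comm[OF bic_diff[OF be bp] bp])
  have iV: "invertible_elem (1 - (- ((e - p) * p)))" by (rule small_invertible[OF sepp])
  define V where "V = inv_el (1 - (- ((e - p) * p)))"
  have bV: "bic a V" unfolding V_def by (intro bic_inv iV bic_intros bp be)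
  have V1: "(1 - (- ((e - p) * p))) * V = 1" unfolding V_def by (rule inv_el_right[OF iV])
  define x where "x = a ^ (n - 1) * p * V"
  have bx: "bic a x" unfolding x_def by (intro bic_intros bp bV)
  have cpe: "p * e = e * p" using bic_comm[OF bp be] by (simp add: comm_el_def)
  have epV: "e * p * V = p"
  proof -
    have "p * (1 - (- ((e - p) * p))) = e * p"
      by (simp add: algebra_simps mult.assoc[symmetric] cpe pp)
    then have "e * p * V = p * ((1 - (- ((e - p) * p))) * V)" by (simp add: mult.assoc[symmetric])
    also have "\<dots> = p" using V1 by simp
    finally show ?thesis .
  qed
  have aan: "a * a ^ (n - 1) = e" unfolding e_def using n by (metis Suc_diff_1 power_Suc)
  have ax: "a * x = p" unfolding x_def by (simp only: mult.assoc[symmetric] aan epV)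
  have xa: "x * a = a * x" using bic_comm[OF bx bic_self] by (simp add: comm_el_def)
  have xax: "x * a * x = x"
  proof -
    have cpa: "p * a ^ (n - 1) = a ^ (n - 1) * p" using bic_comm[OF bp bic_power[OF bic_self]] by (simp add: comm_el_def)
    have "x * a * x = p * x" by (simp add: xa ax)
    also have "\<dots> = (p * a ^ (n - 1)) * p * V" by (simp only: x_def mult.assoc)
    also have "\<dots> = a ^ (n - 1) * (p * p) * V" by (simp only: cpa mult.assoc)
    finally show ?thesis by (simp only: pp x_def)
  qed
  define y where "y = a - a ^ (n + 2) * x"
  have yeq: "y = q * p + a * (1 - p)"
  proof -
    have pw: "a ^ (n + 2) = a ^ (n + 1) * a" using power_Suc2[of a "n+1"] by simp
    have "a ^ (n + 2) * x = a ^ (n + 1) * p" unfolding pw by (simp add: mult.assoc ax)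
    then show ?thesis unfolding y_def q_def by (simp add: algebra_simps)
  qed
  have s1: "small (q * p)" by (rule small_mult_comm[OF sq bic_comm[OF bq bp]])
  have s2: "small (a * (1 - p))"
  proof (rule small_root[OF n])
    have ip: "(1 - p) * (1 - p) = 1 - p" by (simp add: algebra_simps pp)
    have ipn: "(1 - p) ^ m = 1 - p" if "m > 0" for m
      using that proof (induction m)
      case (Suc m) then show ?case by (cases "m = 0") (simp_all add: ip)
    qed simp
    have "(a * (1 - p)) ^ n = a ^ n * (1 - p) ^ n"
      by (rule comm_el_power_mult[OF bic_comm[OF bic_self bic_diff[OF bic_one bp]]])
    also have "\<dots> = e * (1 - p)" by (simp add: ipn[OF n] e_def)
    also have "\<dots> = (e - p) * (1 - p)" by (simp add: algebra_simps pp)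
    finally have eq: "(a * (1 - p)) ^ n = (e - p) * (1 - p)" .
    show "small ((a * (1 - p)) ^ n)" unfolding eq
      by (rule small_mult_comm[OF sep bic_comm[OF bic_diff[OF be bp] bic_diff[OF bic_one bp]]])
  qed
  have cqp: "p * q = q * p" using bic_comm[OF bp bq] by (simp add: comm_el_def)
  have cap: "p * a = a * p" using bic_comm[OF bp bic_self] by (simp add: comm_el_def)
  have o1: "(q * p) * (a * (1 - p)) = 0"
  proof -
    have "(q * p) * (a * (1 - p)) = q * (p * a) * (1 - p)" by (simp add: mult.assoc)
    also have "\<dots> = q * a * (p * (1 - p))" by (simp add: cap mult.assoc)
    also have "p * (1 - p) = 0" by (simp add: algebra_simps pp)
    finally show ?thesis by simp
  qed
  have o2: "(a * (1 - p)) * (q * p) = 0"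
  proof -
    have "(a * (1 - p)) * (q * p) = a * ((1 - p) * q) * p" by (simp add: mult.assoc)
    also have "(1 - p) * q = q * (1 - p)" by (simp add: algebra_simps cqp)
    also have "a * (q * (1 - p)) * p = a * q * ((1 - p) * p)" by (simp add: mult.assoc)
    also have "(1 - p) * p = 0" by (simp add: algebra_simps pp)
    finally show ?thesis by simp
  qed
  have "small y" unfolding yeq by (rule small_orth_add[OF s1 s2 o1 o2])
  then have "quasinilpotent y" by (rule small_qnil)
  then have "quasinilpotent (a - a ^ (n + 2) * x)" by (simp add: y_def)
  then show ?thesis unfolding gpi_Hirano_invertible_def
    by (intro exI[of _ x] conjI xax xa[symmetric] exI[of _ n] n)
qed

section \<open>Open sets of invertibles and connectivity\<close>

lemma open_invertibles: "open {u::'a::{real_normed_algebra_1,banach}. invertible_elem u}"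
  unfolding open_contains_ball
proof (intro ballI)
  fix v :: 'a assume "v \<in> {u. invertible_elem u}"
  then have v: "invertible_elem v" by simp
  let ?e = "1 / (2 * (norm (inv_el v) + 1))"
  have e: "?e > 0" by (smt (verit) norm_ge_zero divide_pos_pos)
  have "ball v ?e \<subseteq> {u. invertible_elem u}"
  proof
    fix u assume "u \<in> ball v ?e"
    then have d: "norm (u - v) < ?e" by (simp add: dist_norm norm_minus_commute)
    have c: "0 < 2 * (norm (inv_el v) + 1)" by (smt (verit) norm_ge_zero)
    have "norm (u - v) * (2 * (norm (inv_el v) + 1)) < 1" using d pos_less_divide_eq[OF c] by simp
    then have "norm (u - v) * norm (inv_el v) \<le> 1/2"
      by (simp add: algebra_simps) (smt (verit) norm_ge_zero)
    from inv_near(1)[OF v this] show "u \<in> {u. invertible_elem u}" by simp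
  qed
  then show "\<exists>e>0. ball v e \<subseteq> {u. invertible_elem u}" using e by blast
qed

lemma open_resolvent: "open {z. invertible_elem (scaleC z 1 - (c::'a::complex_banach_algebra_1))}"
proof -
  have "{z. invertible_elem (scaleC z 1 - c)} = (\<lambda>z. scaleC z 1 - c) -` {u. invertible_elem u}" by auto
  also have "open \<dots>"
  proof (rule continuous_open_vimage[OF open_invertibles])
    fix z :: complex
    show "continuous (at z) (\<lambda>z. scaleC z 1 - c)"
      unfolding continuous_at by (intro tendsto_diff tendsto_scaleC tendsto_ident_at tendsto_const)
  qed
  finally show ?thesis .
qed


lemma conn_aux:
  fixes c :: "'a::complex_banach_algebra_1"
  assumes U: "connected U" and S: "S = {z\<in>U. invertible_elem (scaleC z 1 - c)}"
    and cl: "closedin (top_of_set U) S" and z0: "z0 \<in> S"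
  shows "\<forall>z\<in>U. invertible_elem (scaleC z 1 - c)"
proof -
  have "openin (top_of_set U) S"
  proof -
    have "S = U \<inter> {z. invertible_elem (scaleC z 1 - c)}" using S by auto
    then show ?thesis using open_resolvent by (auto intro: openin_open_Int)
  qed
  then have "S = {} \<or> S = U" using cl U by (simp add: connected_clopen)
  then show ?thesis using z0 S by auto
qed

lemma conn_right:
  fixes c :: "'a::complex_banach_algebra_1"
  assumes U: "connected U" and g: "continuous_on U g"
    and r: "\<And>z. z \<in> U \<Longrightarrow> (scaleC z 1 - c) * g z = 1"
    and z0: "z0 \<in> U" "invertible_elem (scaleC z0 1 - c)"
  shows "\<forall>z\<in>U. invertible_elem (scaleC z 1 - c)"
proof -
  define S where "S = {z\<in>U. invertible_elem (scaleC z 1 - c)}"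
  have S2: "S = {z\<in>U. g z * (scaleC z 1 - c) = 1}"
  proof -
    have "invertible_elem (scaleC z 1 - c) \<longleftrightarrow> g z * (scaleC z 1 - c) = 1" if z: "z \<in> U" for z
    proof
      assume i: "invertible_elem (scaleC z 1 - c)"
      have "g z = inv_el (scaleC z 1 - c)" by (rule inv_el_unique_right[OF i r[OF z]])
      then show "g z * (scaleC z 1 - c) = 1" using inv_el_left[OF i] by simp
    next
      assume "g z * (scaleC z 1 - c) = 1"
      then show "invertible_elem (scaleC z 1 - c)" using r[OF z] invertibleI by blast
    qed
    then show ?thesis unfolding S_def by auto
  qed
  have cont: "continuous_on U (\<lambda>z. g z * (scaleC z 1 - c))"
    by (intro continuous_on_mult g continuous_on_diff continuous_on_scaleC continuous_on_id continuous_on_const)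
  have cl: "closedin (top_of_set U) S"
    unfolding S2 by (rule continuous_closedin_preimage_constant[OF cont])
  show ?thesis by (rule conn_aux[OF U S_def cl]) (use z0 S_def in auto)
qed

lemma conn_left:
  fixes c :: "'a::complex_banach_algebra_1"
  assumes U: "connected U" and g: "continuous_on U g"
    and r: "\<And>z. z \<in> U \<Longrightarrow> g z * (scaleC z 1 - c) = 1"
    and z0: "z0 \<in> U" "invertible_elem (scaleC z0 1 - c)"
  shows "\<forall>z\<in>U. invertible_elem (scaleC z 1 - c)"
proof -
  define S where "S = {z\<in>U. invertible_elem (scaleC z 1 - c)}"
  have S2: "S = {z\<in>U. (scaleC z 1 - c) * g z = 1}"
  proof -
    have "invertible_elem (scaleC z 1 - c) \<longleftrightarrow> (scaleC z 1 - c) * g z = 1" if z: "z \<in> U" for z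
    proof
      assume i: "invertible_elem (scaleC z 1 - c)"
      have "g z = inv_el (scaleC z 1 - c)" by (rule inv_el_unique_left[OF i r[OF z]])
      then show "(scaleC z 1 - c) * g z = 1" using inv_el_right[OF i] by simp
    next
      assume "(scaleC z 1 - c) * g z = 1"
      then show "invertible_elem (scaleC z 1 - c)" using r[OF z] invertibleI by blast
    qed
    then show ?thesis unfolding S_def by auto
  qed
  have cont: "continuous_on U (\<lambda>z. (scaleC z 1 - c) * g z)"
    by (intro continuous_on_mult g continuous_on_diff continuous_on_scaleC continuous_on_id continuous_on_const)
  have cl: "closedin (top_of_set U) S"
    unfolding S2 by (rule continuous_closedin_preimage_constant[OF cont])
  show ?thesis by (rule conn_aux[OF U S_def cl]) (use z0 S_def in auto)
qed

lemma big_invertible: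
  fixes c :: "'a::complex_banach_algebra_1"
  assumes "norm c < cmod z"
  shows "invertible_elem (scaleC z 1 - c)"
proof -
  have z: "z \<noteq> 0" using assms by (metis norm_ge_zero norm_zero not_less)
  have "norm (scaleC (1/z) c) < 1" using assms z by (simp add: norm_scaleC norm_divide field_simps)
  then have i: "invertible_elem (1 - scaleC (1/z) c)" by (rule neumann_norm(1))
  have "scaleC z 1 - c = scaleC z (1 - scaleC (1/z) c)"
    using z by (simp add: scaleC_diff_right scaleC_scaleC scaleC_one)
  then show ?thesis using invertible_scaleC[OF z i] by simp
qed

lemma finite_complement_connected:
  fixes F :: "complex set"
  assumes "finite F"
  shows "connected (- F)" "open (- F)"
proof -
  have "path_connected (- F)"
    by (rule path_connected_complement_countable) (simp_all add: assms countable_finite)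
  then show "connected (- F)" by (rule path_connected_imp_connected)
  show "open (- F)" using assms by (simp add: finite_imp_closed open_Compl)
qed

lemma far_point:
  fixes F :: "complex set"
  assumes "finite F"
  shows "\<exists>z. z \<notin> F \<and> R < cmod z"
proof -
  define M where "M = max R (Max (insert 0 (cmod ` F)))"
  have "cmod w \<le> M" if "w \<in> F" for w
    unfolding M_def by (rule order.trans[OF Max_ge max.cobounded2]) (use assms that in auto)
  then show ?thesis
    by (intro exI[of _ "complex_of_real (M + 1)"])
       (smt (verit, best) M_def norm_of_real)
qed

section \<open>Words\<close>

definition good :: "'a::ring_1 \<Rightarrow> 'a \<Rightarrow> nat \<Rightarrow> nat \<Rightarrow> 'a \<Rightarrow> bool" where
  "good a b k n v \<longleftrightarrow> (\<forall>ps. set ps \<subseteq> {a, b} \<and> k \<le> length ps + n \<longrightarrow> prod_list ps * v = 0)"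

lemma good_ab:
  assumes W: "\<forall>\<alpha>s. length \<alpha>s = k \<and> set \<alpha>s \<subseteq> {a, b} \<longrightarrow> prod_list \<alpha>s * a * b = 0"
  shows "good a b k 0 (a * b)"
  unfolding good_def
proof (intro allI impI)
  fix ps :: "'a list" assume ps: "set ps \<subseteq> {a, b} \<and> k \<le> length ps + 0"
  define xs where "xs = take (length ps - k) ps"
  define ys where "ys = drop (length ps - k) ps"
  have "ps = xs @ ys" unfolding xs_def ys_def by simp
  moreover have "length ys = k" unfolding ys_def using ps by simp
  moreover have "set ys \<subseteq> {a, b}" unfolding ys_def using ps by (meson order.trans set_drop_subset)
  ultimately have "prod_list ps * (a * b) = prod_list xs * (prod_list ys * a * b)"
    by (simp add: mult.assoc)
  also have "prod_list ys * a * b = 0" using W \<open>length ys = k\<close> \<open>set ys \<subseteq> {a, b}\<close> by blast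
  finally show "prod_list ps * (a * b) = 0" by simp
qed

lemma good_left:
  assumes "good a b k n v" "c \<in> {a, b}"
  shows "good a b k (Suc n) (c * v)"
  unfolding good_def
proof (intro allI impI)
  fix ps :: "'a list" assume ps: "set ps \<subseteq> {a, b} \<and> k \<le> length ps + Suc n"
  have "prod_list ps * (c * v) = prod_list (ps @ [c]) * v" by (simp add: mult.assoc)
  also have "\<dots> = 0"
  proof -
    have h: "set (ps @ [c]) \<subseteq> {a, b} \<and> k \<le> length (ps @ [c]) + n" using ps assms(2) by auto
    show ?thesis using assms(1)[unfolded good_def, rule_format, OF h] .
  qed
  finally show "prod_list ps * (c * v) = 0" .
qed

lemma good_add: "good a b k n v \<Longrightarrow> good a b k n w \<Longrightarrow> good a b k n (v + w)"
  unfolding good_def by (simp add: distrib_left)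

lemma good_zero: "good a b k n 0"
  unfolding good_def by simp

lemma good_scaleC: "good a b k n v \<Longrightarrow> good a b k n (scaleC z (v::'a::complex_banach_algebra_1))"
  unfolding good_def by (simp add: mult_scaleC_right)

lemma good_mono: "good a b k n v \<Longrightarrow> m \<le> n \<Longrightarrow> good a b k m v"
  unfolding good_def by fastforce

lemma good_sum: "(\<And>i. i \<in> A \<Longrightarrow> good a b k n (f i)) \<Longrightarrow> good a b k n (sum f A)"
  by (induction A rule: infinite_finite_induct) (auto intro: good_add good_zero)

lemma good_sum_left: "good a b k n v \<Longrightarrow> good a b k (Suc n) ((a + b) * v)"
  by (simp add: distrib_right good_add good_left)

lemma good_pow: "good a b k n v \<Longrightarrow> good a b k (n + j) ((a + b) ^ j * v)"
proof (induction j)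
  case (Suc j)
  have "(a + b) ^ Suc j * v = (a + b) * ((a + b) ^ j * v)" by (simp add: mult.assoc)
  then show ?case using good_sum_left[OF Suc.IH[OF Suc.prems]] by simp
qed simp

lemma good_kill: "good a b k n v \<Longrightarrow> k \<le> n \<Longrightarrow> v = 0"
  unfolding good_def by (erule allE[of _ "[]"]) simp


definition EE :: "'a::complex_banach_algebra_1 \<Rightarrow> 'a \<Rightarrow> nat \<Rightarrow> complex \<Rightarrow> 'a" where
  "EE a b k z = (\<Sum>j<k. scaleC ((1/z) ^ Suc j) ((a + b) ^ j * (a * b)))"

lemma EE_mult_good:
  fixes a b :: "'a::complex_banach_algebra_1"
  assumes w: "good a b k n w"
  shows "good a b k (n + 2) (EE a b k z * w)"
proof -
  have e: "EE a b k z * w = (\<Sum>j<k. scaleC ((1/z) ^ Suc j) ((a + b) ^ j * (a * (b * w))))"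
    unfolding EE_def by (simp add: sum_distrib_right mult_scaleC_left mult.assoc)
  have g2: "good a b k (Suc (Suc n)) (a * (b * w))"
    by (intro good_left[OF good_left[OF w]]) simp_all
  show ?thesis unfolding e
  proof (intro good_sum good_scaleC)
    fix j
    show "good a b k (n + 2) ((a + b) ^ j * (a * (b * w)))"
      using good_pow[OF g2, of j] by (rule good_mono) simp
  qed
qed

lemma EE_good:
  fixes a b :: "'a::complex_banach_algebra_1"
  assumes W: "\<forall>\<alpha>s. length \<alpha>s = k \<and> set \<alpha>s \<subseteq> {a, b} \<longrightarrow> prod_list \<alpha>s * a * b = 0"
  shows "good a b k 0 (EE a b k z)"
  unfolding EE_def
proof (intro good_sum good_scaleC)
  fix j
  show "good a b k 0 ((a + b) ^ j * (a * b))"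
    using good_pow[OF good_ab[OF W], of j] by (rule good_mono) simp
qed

lemma EE_pow_good:
  fixes a b :: "'a::complex_banach_algebra_1"
  assumes W: "\<forall>\<alpha>s. length \<alpha>s = k \<and> set \<alpha>s \<subseteq> {a, b} \<longrightarrow> prod_list \<alpha>s * a * b = 0"
  shows "good a b k (2 * m) (EE a b k z ^ Suc m)"
proof (induction m)
  case 0 then show ?case using EE_good[OF W] by simp
next
  case (Suc m)
  have "EE a b k z ^ Suc (Suc m) = EE a b k z * EE a b k z ^ Suc m" by simp
  then show ?case using EE_mult_good[OF Suc.IH, of z] by simp
qed

lemma EE_nil:
  fixes a b :: "'a::complex_banach_algebra_1"
  assumes W: "\<forall>\<alpha>s. length \<alpha>s = k \<and> set \<alpha>s \<subseteq> {a, b} \<longrightarrow> prod_list \<alpha>s * a * b = 0"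
  shows "EE a b k z ^ Suc k = 0"
  using good_kill[OF EE_pow_good[OF W, of k z]] by simp

lemma sk_zero:
  fixes a b :: "'a::complex_banach_algebra_1"
  assumes W: "\<forall>\<alpha>s. length \<alpha>s = k \<and> set \<alpha>s \<subseteq> {a, b} \<longrightarrow> prod_list \<alpha>s * a * b = 0"
  shows "(a + b) ^ k * (a * b) = 0"
  using good_kill[OF good_pow[OF good_ab[OF W], of k]] by simp

lemma EE_id:
  fixes a b :: "'a::complex_banach_algebra_1"
  assumes W: "\<forall>\<alpha>s. length \<alpha>s = k \<and> set \<alpha>s \<subseteq> {a, b} \<longrightarrow> prod_list \<alpha>s * a * b = 0"
    and z: "z \<noteq> 0"
  shows "(scaleC z 1 - (a + b)) * EE a b k z = a * b"
proof -
  define T where "T j = scaleC ((1/z) ^ j) ((a + b) ^ j * (a * b))" for j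
  have t: "(scaleC z 1 - (a + b)) * scaleC ((1/z) ^ Suc j) ((a + b) ^ j * (a * b)) = T j - T (Suc j)" for j
  proof -
    let ?X = "(a + b) ^ j * (a * b)" and ?c = "(1/z) ^ Suc j"
    have "(scaleC z 1 - (a + b)) * scaleC ?c ?X = scaleC ?c ((scaleC z 1 - (a + b)) * ?X)"
      by (rule mult_scaleC_right)
    also have "(scaleC z 1 - (a + b)) * ?X = scaleC z ?X - (a + b) ^ Suc j * (a * b)"
      by (simp only: left_diff_distrib scaleC_1_mult power_Suc mult.assoc)
    also have "scaleC ?c (scaleC z ?X - (a + b) ^ Suc j * (a * b)) = scaleC (?c * z) ?X - T (Suc j)"
      by (simp only: scaleC_diff_right scaleC_scaleC T_def)
    also have "?c * z = (1/z) ^ j" using z by simp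
    finally show ?thesis by (simp only: T_def)
  qed
  have "(scaleC z 1 - (a + b)) * EE a b k z = (\<Sum>j<k. T j - T (Suc j))"
    unfolding EE_def sum_distrib_left t ..
  also have "\<dots> = T 0 - T k" by (rule sum_lessThan_telescope')
  also have "T k = 0" unfolding T_def using sk_zero[OF W] by simp
  finally show ?thesis by (simp add: T_def scaleC_one)
qed

lemma M_id:
  fixes a b :: "'a::complex_banach_algebra_1"
  assumes W: "\<forall>\<alpha>s. length \<alpha>s = k \<and> set \<alpha>s \<subseteq> {a, b} \<longrightarrow> prod_list \<alpha>s * a * b = 0"
    and z: "z \<noteq> 0"
  shows "(scaleC z 1 - a) * (scaleC z 1 - b) = (scaleC z 1 - (a + b)) * (scaleC z 1 + EE a b k z)"
proof -
  have "(scaleC z 1 - (a + b)) * (scaleC z 1 + EE a b k z)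
      = (scaleC z 1 - (a + b)) * scaleC z 1 + a * b"
    by (simp add: distrib_left EE_id[OF W z])
  also have "(scaleC z 1 - (a + b)) * scaleC z 1 = scaleC z (scaleC z 1) - scaleC z a - scaleC z b"
    by (simp add: mult_scaleC_1 scaleC_diff_right scaleC_add_right)
  also have "scaleC z (scaleC z 1) - scaleC z a - scaleC z b + a * b = (scaleC z 1 - a) * (scaleC z 1 - b)"
    by (simp add: algebra_simps scaleC_1_mult mult_scaleC_1 scaleC_diff_right)
  finally show ?thesis by simp
qed

lemma nil_invertible:
  fixes N :: "'a::ring_1"
  assumes "N ^ m = 0"
  shows "invertible_elem (1 - N)"
proof -
  have t: "(\<Sum>i<m. N ^ i - N ^ Suc i) = 1 - N ^ m" using sum_lessThan_telescope'[of "\<lambda>i. N ^ i" m] by simp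
  have "(1 - N) * (\<Sum>i<m. N ^ i) = (\<Sum>i<m. N ^ i - N ^ Suc i)"
    by (simp add: sum_distrib_left left_diff_distrib sum_subtractf)
  moreover have "(\<Sum>i<m. N ^ i) * (1 - N) = (\<Sum>i<m. N ^ i - N ^ Suc i)"
    by (simp add: sum_distrib_right right_diff_distrib power_commutes sum_subtractf)
  ultimately show ?thesis using t assms by (intro invertibleI[of _ "\<Sum>i<m. N ^ i"]) simp_all
qed

lemma zE_invertible:
  fixes a b :: "'a::complex_banach_algebra_1"
  assumes W: "\<forall>\<alpha>s. length \<alpha>s = k \<and> set \<alpha>s \<subseteq> {a, b} \<longrightarrow> prod_list \<alpha>s * a * b = 0"
    and z: "z \<noteq> 0"
  shows "invertible_elem (scaleC z 1 + EE a b k z)"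
proof -
  define N where "N = scaleC (- (1/z)) (EE a b k z)"
  have "N ^ Suc k = 0" unfolding N_def scaleC_power EE_nil[OF W] by simp
  then have i: "invertible_elem (1 - N)" by (rule nil_invertible)
  have "scaleC z 1 + EE a b k z = scaleC z (1 - N)"
    using z by (simp add: N_def scaleC_add_right scaleC_diff_right scaleC_minus_left scaleC_scaleC scaleC_one)
  then show ?thesis using invertible_scaleC[OF z i] by simp
qed

lemma continuous_on_EE:
  fixes a b :: "'a::complex_banach_algebra_1"
  assumes "0 \<notin> U"
  shows "continuous_on U (EE a b k)"
proof -
  have "continuous_on U (\<lambda>z. (1/z) ^ Suc j)" for j
    using assms by (intro continuous_intros) auto
  then show ?thesis unfolding EE_def[abs_def]
    by (intro continuous_on_sum continuous_on_scaleC continuous_on_const) auto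
qed

lemma FWD:
  fixes a b :: "'a::complex_banach_algebra_1"
  assumes W: "\<forall>\<alpha>s. length \<alpha>s = k \<and> set \<alpha>s \<subseteq> {a, b} \<longrightarrow> prod_list \<alpha>s * a * b = 0"
    and F: "finite F" "0 \<in> F" and sa: "spectrum a \<subseteq> F" and sb: "spectrum b \<subseteq> F"
  shows "spectrum (a + b) \<subseteq> F"
proof -
  let ?U = "- F"
  define M where "M z = (scaleC z 1 - a) * (scaleC z 1 - b)" for z
  define g where "g z = (scaleC z 1 + EE a b k z) * inv_el (M z)" for z
  have iM: "invertible_elem (M z)" if z: "z \<in> ?U" for z
  proof -
    have "invertible_elem (scaleC z 1 - a)" using z sa by (auto simp: spectrum_def)
    moreover have "invertible_elem (scaleC z 1 - b)" using z sb by (auto simp: spectrum_def)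
    ultimately show ?thesis unfolding M_def by (rule invertible_mult)
  qed
  have r: "(scaleC z 1 - (a + b)) * g z = 1" if z: "z \<in> ?U" for z
  proof -
    have z0: "z \<noteq> 0" using z F by auto
    have "(scaleC z 1 - (a + b)) * g z = M z * inv_el (M z)"
      unfolding g_def M_def M_id[OF W z0] by (simp add: mult.assoc)
    then show ?thesis using inv_el_right[OF iM[OF z]] by simp
  qed
  have 0: "0 \<notin> ?U" using F by simp
  have cM: "continuous_on ?U M" unfolding M_def
    by (intro continuous_intros continuous_on_scaleC)
  have cg: "continuous_on ?U g" unfolding g_def
    by (intro continuous_on_mult continuous_on_add continuous_on_scaleC continuous_on_id continuous_on_const
        continuous_on_EE[OF 0] continuous_on_inv_el[OF cM iM])
  obtain z0 where z0: "z0 \<notin> F" "norm (a + b) < cmod z0" using far_point[OF F(1)] by blast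
  have "\<forall>z\<in>?U. invertible_elem (scaleC z 1 - (a + b))"
    by (rule conn_right[OF finite_complement_connected(1)[OF F(1)] cg r])
       (use z0 big_invertible in auto)
  then show ?thesis by (auto simp: spectrum_def)
qed

lemma BWD:
  fixes a b :: "'a::complex_banach_algebra_1"
  assumes W: "\<forall>\<alpha>s. length \<alpha>s = k \<and> set \<alpha>s \<subseteq> {a, b} \<longrightarrow> prod_list \<alpha>s * a * b = 0"
    and F: "finite F" "0 \<in> F" and ss: "spectrum (a + b) \<subseteq> F"
  shows "spectrum a \<subseteq> F" "spectrum b \<subseteq> F"
proof -
  let ?U = "- F"
  define M where "M z = (scaleC z 1 - (a + b)) * (scaleC z 1 + EE a b k z)" for z
  have 0: "0 \<notin> ?U" using F by simp
  have iM: "invertible_elem (M z)" if z: "z \<in> ?U" for z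
  proof -
    have z0: "z \<noteq> 0" using z F by auto
    have "invertible_elem (scaleC z 1 - (a + b))" using z ss by (auto simp: spectrum_def)
    then show ?thesis unfolding M_def by (rule invertible_mult[OF _ zE_invertible[OF W z0]])
  qed
  have Meq: "M z = (scaleC z 1 - a) * (scaleC z 1 - b)" if z: "z \<in> ?U" for z
  proof -
    have z0: "z \<noteq> 0" using z F by auto
    show ?thesis unfolding M_def using M_id[OF W z0] by simp
  qed
  have cM: "continuous_on ?U M" unfolding M_def
    by (intro continuous_on_mult continuous_on_add continuous_on_diff continuous_on_scaleC
        continuous_on_id continuous_on_const continuous_on_EE[OF 0])
  have ciM: "continuous_on ?U (\<lambda>z. inv_el (M z))" by (rule continuous_on_inv_el[OF cM iM])
  obtain z0 where z0: "z0 \<notin> F" "max (norm a) (norm b) < cmod z0" using far_point[OF F(1)] by blast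
  define g where "g z = (scaleC z 1 - b) * inv_el (M z)" for z
  have cg: "continuous_on ?U g" unfolding g_def
    by (intro continuous_on_mult continuous_on_diff continuous_on_scaleC continuous_on_id continuous_on_const ciM)
  have rg: "(scaleC z 1 - a) * g z = 1" if z: "z \<in> ?U" for z
  proof -
    have "(scaleC z 1 - a) * g z = M z * inv_el (M z)" unfolding g_def Meq[OF z] by (simp add: mult.assoc)
    then show ?thesis using inv_el_right[OF iM[OF z]] by simp
  qed
  have "\<forall>z\<in>?U. invertible_elem (scaleC z 1 - a)"
    by (rule conn_right[OF finite_complement_connected(1)[OF F(1)] cg rg])
       (use z0 big_invertible in auto)
  then show "spectrum a \<subseteq> F" by (auto simp: spectrum_def)
  define h where "h z = inv_el (M z) * (scaleC z 1 - a)" for z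
  have ch: "continuous_on ?U h" unfolding h_def
    by (intro continuous_on_mult continuous_on_diff continuous_on_scaleC continuous_on_id continuous_on_const ciM)
  have rh: "h z * (scaleC z 1 - b) = 1" if z: "z \<in> ?U" for z
  proof -
    have "h z * (scaleC z 1 - b) = inv_el (M z) * M z" unfolding h_def Meq[OF z] by (simp add: mult.assoc)
    then show ?thesis using inv_el_left[OF iM[OF z]] by simp
  qed
  have "\<forall>z\<in>?U. invertible_elem (scaleC z 1 - b)"
    by (rule conn_left[OF finite_complement_connected(1)[OF F(1)] ch rh])
       (use z0 big_invertible in auto)
  then show "spectrum b \<subseteq> F" by (auto simp: spectrum_def)
qed

theorem theorem3p4:
  fixes a b :: "'a::complex_banach_algebra_1" and k :: nat
  assumes "k > 0"
    and "\<forall>\<alpha>s. length \<alpha>s = k \<and> set \<alpha>s \<subseteq> {a, b} \<longrightarrow> prod_list \<alpha>s * a * b = 0"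
  shows "(gpi_Hirano_invertible a \<and> gpi_Hirano_invertible b) \<longleftrightarrow> gpi_Hirano_invertible (a + b)"
proof
  assume h: "gpi_Hirano_invertible a \<and> gpi_Hirano_invertible b"
  obtain n1 where n1: "n1 > 0" "spectrum a \<subseteq> {0} \<union> {z. z ^ n1 = 1}" using GH h by blast
  obtain n2 where n2: "n2 > 0" "spectrum b \<subseteq> {0} \<union> {z. z ^ n2 = 1}" using GH h by blast
  define F where "F = {0} \<union> {z::complex. z ^ (n1 * n2) = 1}"
  have fF: "finite F" unfolding F_def using n1 n2 by (simp add: finite_roots_unity)
  have sa: "spectrum a \<subseteq> F" using n1(2) unfolding F_def by (auto simp: power_mult)
  have sb: "spectrum b \<subseteq> F" using n2(2) unfolding F_def by (auto simp: power_mult mult.commute[of n1])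
  have "spectrum (a + b) \<subseteq> F" by (rule FWD[OF assms(2) fF _ sa sb]) (simp add: F_def)
  then show "gpi_Hirano_invertible (a + b)" unfolding F_def
    by (intro HG) (use n1 n2 in auto)
next
  assume h: "gpi_Hirano_invertible (a + b)"
  obtain n where n: "n > 0" "spectrum (a + b) \<subseteq> {0} \<union> {z. z ^ n = 1}" using GH h by blast
  have fF: "finite ({0} \<union> {z::complex. z ^ n = 1})" using n by (simp add: finite_roots_unity)
  note B = BWD[OF assms(2) fF _ n(2)]
  show "gpi_Hirano_invertible a \<and> gpi_Hirano_invertible b"
    using HG[OF n(1) B(1)] HG[OF n(1) B(2)] by simp
qed

end
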